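(* Let $1\le l\le m$ and $0\le r\le\lfloor(m-l-1)/2\rfloor$, and put $k(r)=\sum_{i=0}^r\binom{m-l}{i}$. Then there exists a pure binary linear quantum convolutional stabilizer code with parameters $[(2^{m-l},\,2^{m-l}-2k(r),\,m')]_2$ for some $m'\le 2^{m-l}(2^l-1)$, and free distance $2^{r+1}$.
   Context: Quantum setup (here $q=2$, and $n,m'$ positive integers): $X(a)|x\rangle=|x+a\rangle$, $Z(b)|x\rangle=(-1)^{bx}|x\rangle$ on $\mathbf C^2$ for $a,b\in\mathbf F_2$, $I=X(0)$. $P_t$ is the group generated by $((t+1)n+m')$-fold tensor products of the $X(a),Z(b)$, with center $Z_t$; $P_\infty$ is the group of infinite tensor products with all but finitely many factors $I$. For abelian $S_0\le P_0$, $S_t=\langle N\otimes I^{\otimes n},I^{\otimes tn}\otimes M: N\in S_{t-1},M\in S_0\rangle$; conditions (S1) $I^{\otimes tn}\otimes M$ and $N\otimes I^{\otimes tn}$ commute for $M,N\in S_0$, $t\ge1$; (S2) $\dim_{\mathbf F_2}S_tZ_t/Z_t=(t+1)(n-k)$; (S3) $S_t\cap Z_t$ trivial. The $+1$-eigenspace of $S=\langle I^{\otimes tn}\otimes M\otimes I^{\otimes\infty}: t\ge0,M\in S_0\rangle$ is an $[(n,k,m')]_2$ convolutional stabilizer code. Weight of $E\in P_\infty$ = number of non-identity factors; free distance $d_f=\min\{\mathrm{wt}(e): e\in C_{P_\infty}(S)\setminus Z(P_\infty)S\}$; the code is pure if the stabilizer contains no non-scalar element of weight less than $d_f$. *)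

theory Defs
  imports "HOL-Algebra.Algebra"
begin

text \<open>A (possibly infinite) tensor product of single-qubit Pauli operators
  with a global sign is represented by a triple (s, a, b): it stands for the operator
  (-1)^s (X(a_0)Z(b_0)) tensor (X(a_1)Z(b_1)) tensor ... , where qubit j carries
  X(a_j)Z(b_j) (True = 1 in F_2, False = 0).  Every element of the group generated
  by tensor products of the X(a), Z(b) (q = 2) has this form uniquely, and
  multiplication follows from Z(b)X(a) = (-1)^(ab) X(a)Z(b).\<close>

type_synonym pauli = "bool \<times> (nat \<Rightarrow> bool) \<times> (nat \<Rightarrow> bool)"

definition pmult :: "pauli \<Rightarrow> pauli \<Rightarrow> pauli" where
  "pmult p q = (case p of (s, a, b) \<Rightarrow> case q of (s', a', b') \<Rightarrow>
     ((s \<noteq> s') \<noteq> odd (card {j. b j \<and> a' j}),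
      (\<lambda>j. a j \<noteq> a' j), (\<lambda>j. b j \<noteq> b' j)))"

definition pone :: pauli where
  "pone = (False, (\<lambda>_. False), (\<lambda>_. False))"

definition pauli_group :: "nat \<Rightarrow> pauli monoid" where
  "pauli_group N = \<lparr>carrier = {(s, a, b). \<forall>j\<ge>N. \<not> a j \<and> \<not> b j},
                     monoid.mult = pmult, one = pone\<rparr>"

definition pauli_inf :: "pauli monoid" where
  "pauli_inf = \<lparr>carrier = {(s, a, b). finite {j. a j \<or> b j}},
                monoid.mult = pmult, one = pone\<rparr>"

definition pweight :: "pauli \<Rightarrow> nat" where
  "pweight p = (case p of (s, a, b) \<Rightarrow> card {j. a j \<or> b j})"

text \<open>I^{tensor d} tensor E (shift by d qubits).\<close>
definition pshift :: "nat \<Rightarrow> pauli \<Rightarrow> pauli" where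
  "pshift d p = (case p of (s, a, b) \<Rightarrow>
     (s, (\<lambda>j. d \<le> j \<and> a (j - d)), (\<lambda>j. d \<le> j \<and> b (j - d))))"

definition gcenter :: "('a, 'b) monoid_scheme \<Rightarrow> 'a set" where
  "gcenter G = {x \<in> carrier G. \<forall>y \<in> carrier G. x \<otimes>\<^bsub>G\<^esub> y = y \<otimes>\<^bsub>G\<^esub> x}"

definition gcentralizer :: "('a, 'b) monoid_scheme \<Rightarrow> 'a set \<Rightarrow> 'a set" where
  "gcentralizer G S = {x \<in> carrier G. \<forall>y \<in> S. x \<otimes>\<^bsub>G\<^esub> y = y \<otimes>\<^bsub>G\<^esub> x}"

text \<open>F_2-dimension of an elementary abelian 2-group written multiplicatively:
  d is the cardinality of a basis, i.e. a finite generating set B such that no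
  nonempty subset of B multiplies to the identity (over F_2 a linear combination
  of basis vectors is exactly the product of a subset).\<close>
definition f2_dim_eq :: "('a, 'b) monoid_scheme \<Rightarrow> nat \<Rightarrow> bool" where
  "f2_dim_eq G d \<longleftrightarrow> (\<exists>B. B \<subseteq> carrier G \<and> finite B \<and> card B = d \<and>
       generate G B = carrier G \<and>
       (\<forall>C \<subseteq> B. finprod G (\<lambda>x. x) C = \<one>\<^bsub>G\<^esub> \<longrightarrow> C = {}))"

definition Pt :: "nat \<Rightarrow> nat \<Rightarrow> nat \<Rightarrow> pauli monoid" where
  "Pt n m' t = pauli_group ((t + 1) * n + m')"

text \<open>S_t = < N tensor I^n, I^{tn} tensor M : N in S_{t-1}, M in S_0 >.
  N tensor I^n is the same triple as N (trailing identities).\<close>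
fun St :: "nat \<Rightarrow> nat \<Rightarrow> pauli set \<Rightarrow> nat \<Rightarrow> pauli set" where
  "St n m' S0 0 = S0"
| "St n m' S0 (Suc t) = generate (Pt n m' (Suc t))
      (St n m' S0 t \<union> pshift (Suc t * n) ` S0)"

definition Sinf :: "nat \<Rightarrow> pauli set \<Rightarrow> pauli set" where
  "Sinf n S0 = generate pauli_inf {pshift (t * n) M | t M. M \<in> S0}"

definition conv_stab_code :: "nat \<Rightarrow> nat \<Rightarrow> nat \<Rightarrow> pauli set \<Rightarrow> bool" where
  "conv_stab_code n k m' S0 \<longleftrightarrow>
     0 < n \<and> 0 < m' \<and> k \<le> n \<and>
     subgroup S0 (Pt n m' 0) \<and>
     (\<forall>x \<in> S0. \<forall>y \<in> S0. pmult x y = pmult y x) \<and>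
     \<comment> \<open>(S1)\<close>
     (\<forall>t \<ge> 1. \<forall>M \<in> S0. \<forall>N \<in> S0.
        pmult (pshift (t * n) M) N = pmult N (pshift (t * n) M)) \<and>
     \<comment> \<open>(S2)\<close>
     (\<forall>t. f2_dim_eq
        ((Pt n m' t)\<lparr>carrier := set_mult (Pt n m' t) (St n m' S0 t) (gcenter (Pt n m' t))\<rparr>
           Mod (gcenter (Pt n m' t)))
        ((t + 1) * (n - k))) \<and>
     \<comment> \<open>(S3)\<close>
     (\<forall>t. St n m' S0 t \<inter> gcenter (Pt n m' t) = {pone})"

definition free_distance :: "nat \<Rightarrow> pauli set \<Rightarrow> nat" where
  "free_distance n S0 = Inf (pweight `
     (gcentralizer pauli_inf (Sinf n S0) - set_mult pauli_inf (gcenter pauli_inf) (Sinf n S0)))"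

definition pure_code :: "nat \<Rightarrow> pauli set \<Rightarrow> bool" where
  "pure_code n S0 \<longleftrightarrow>
     (\<forall>e \<in> Sinf n S0. e \<notin> gcenter pauli_inf \<longrightarrow> free_distance n S0 \<le> pweight e)"

end

theory Submission
  imports Defs "HOL-Library.Nat_Bijection"
begin


definition vadd :: "(nat \<Rightarrow> bool) \<Rightarrow> (nat \<Rightarrow> bool) \<Rightarrow> nat \<Rightarrow> bool" where
  "vadd u v = (\<lambda>j. u j \<noteq> v j)"
definition ip :: "(nat \<Rightarrow> bool) \<Rightarrow> (nat \<Rightarrow> bool) \<Rightarrow> bool" where
  "ip u v = odd (card {j. u j \<and> v j})"
definition fs :: "(nat \<Rightarrow> bool) \<Rightarrow> bool" where
  "fs u = finite {j. u j}"
definition vsum :: "('i \<Rightarrow> nat \<Rightarrow> bool) \<Rightarrow> 'i set \<Rightarrow> nat \<Rightarrow> bool" where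
  "vsum g C = (\<lambda>j. odd (card {i\<in>C. g i j}))"
abbreviation zv :: "nat \<Rightarrow> bool" where "zv \<equiv> (\<lambda>_. False)"

lemma odd_card_symdiff:
  assumes "finite A" "finite B"
  shows "odd (card ((A - B) \<union> (B - A))) = (odd (card A) \<noteq> odd (card B))"
proof -
  have 1: "card A = card (A - B) + card (A \<inter> B)"
  proof -
    have "A = (A - B) \<union> (A \<inter> B)" by auto
    then have "card A = card ((A - B) \<union> (A \<inter> B))" by simp
    also have "\<dots> = card (A - B) + card (A \<inter> B)" by (rule card_Un_disjoint) (use assms in auto)
    finally show ?thesis .
  qed
  have 2: "card B = card (B - A) + card (A \<inter> B)"
  proof -
    have "B = (B - A) \<union> (A \<inter> B)" by auto
    then have "card B = card ((B - A) \<union> (A \<inter> B))" by simp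
    also have "\<dots> = card (B - A) + card (A \<inter> B)" by (rule card_Un_disjoint) (use assms in auto)
    finally show ?thesis .
  qed
  have 3: "card ((A - B) \<union> (B - A)) = card (A - B) + card (B - A)"
    by (rule card_Un_disjoint) (use assms in auto)
  show ?thesis using 1 2 3 by presburger
qed

lemma ip_sym: "ip u v = ip v u"
  unfolding ip_def by (simp add: conj_commute)

lemma ip_add:
  assumes "fs u" "fs u'"
  shows "ip (vadd u u') v = (ip u v \<noteq> ip u' v)"
proof -
  let ?A = "{j. u j \<and> v j}" and ?B = "{j. u' j \<and> v j}"
  have f: "finite ?A" "finite ?B" using assms unfolding fs_def by auto
  have "{j. vadd u u' j \<and> v j} = (?A - ?B) \<union> (?B - ?A)"
    unfolding vadd_def by auto
  then show ?thesis unfolding ip_def using odd_card_symdiff[OF f] by simp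
qed

lemma ip_add2:
  assumes "fs u" "fs u'"
  shows "ip v (vadd u u') = (ip v u \<noteq> ip v u')"
  using ip_add[OF assms] ip_sym by metis

lemma fs_vadd: "fs u \<Longrightarrow> fs v \<Longrightarrow> fs (vadd u v)"
  unfolding fs_def vadd_def
  by (rule finite_subset[of _ "{j. u j} \<union> {j. v j}"]) auto

lemma fs_zv[simp]: "fs zv" unfolding fs_def by simp
lemma ip_zv[simp]: "ip zv v = False" "ip v zv = False" unfolding ip_def by simp_all
lemma vadd_zv[simp]: "vadd zv v = v" "vadd v zv = v" "vadd v v = zv"
  unfolding vadd_def by auto
lemma vadd_comm: "vadd u v = vadd v u" unfolding vadd_def by auto
lemma vadd_assoc: "vadd (vadd u v) w = vadd u (vadd v w)" unfolding vadd_def by auto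

lemma vsum_empty[simp]: "vsum g {} = zv" unfolding vsum_def by simp

lemma vsum_insert:
  assumes "finite C" "i \<notin> C"
  shows "vsum g (insert i C) = vadd (g i) (vsum g C)"
proof
  fix j
  show "vsum g (insert i C) j = vadd (g i) (vsum g C) j"
  proof (cases "g i j")
    case True
    then have "{i'\<in>insert i C. g i' j} = insert i {i'\<in>C. g i' j}" by auto
    then show ?thesis using True assms unfolding vsum_def vadd_def by simp
  next
    case False
    then have "{i'\<in>insert i C. g i' j} = {i'\<in>C. g i' j}" by auto
    then show ?thesis using False assms unfolding vsum_def vadd_def by simp
  qed
qed

lemma fs_vsum:
  assumes "finite C" "\<forall>i\<in>C. fs (g i)"
  shows "fs (vsum g C)"
  using assms by (induction C rule: finite_induct) (auto simp: vsum_insert fs_vadd)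

lemma ip_vsum:
  assumes "finite C" "\<forall>i\<in>C. fs (g i)"
  shows "ip (vsum g C) v = odd (card {i\<in>C. ip (g i) v})"
  using assms
proof (induction C rule: finite_induct)
  case empty then show ?case by simp
next
  case (insert i C)
  have e: "ip (vsum g (insert i C)) v = (ip (g i) v \<noteq> ip (vsum g C) v)"
    using insert by (simp add: vsum_insert ip_add fs_vsum)
  show ?case
  proof (cases "ip (g i) v")
    case True
    then have "{i'\<in>insert i C. ip (g i') v} = insert i {i'\<in>C. ip (g i') v}" by auto
    then show ?thesis using e insert True by simp
  next
    case False
    then have "{i'\<in>insert i C. ip (g i') v} = {i'\<in>C. ip (g i') v}" by auto
    then show ?thesis using e insert False by simp
  qed
qed

lemma ip_vsum_zero:
  assumes "finite C" "\<forall>i\<in>C. fs (g i)" "\<forall>i\<in>C. \<not> ip (g i) v"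
  shows "\<not> ip (vsum g C) v"
proof -
  have "{i\<in>C. ip (g i) v} = {}" using assms(3) by auto
  then have "card {i\<in>C. ip (g i) v} = 0" by (simp only: card.empty)
  then show ?thesis using ip_vsum[OF assms(1,2), of v] by (metis even_zero)
qed

lemma vsum_add:
  assumes "finite C" "finite D"
  shows "vadd (vsum g C) (vsum g D) = vsum g ((C - D) \<union> (D - C))"
proof
  fix j
  let ?A = "{i\<in>C. g i j}" and ?B = "{i\<in>D. g i j}"
  have "{i\<in>(C - D) \<union> (D - C). g i j} = (?A - ?B) \<union> (?B - ?A)" by auto
  then show "vadd (vsum g C) (vsum g D) j = vsum g ((C - D) \<union> (D - C)) j"
    unfolding vsum_def vadd_def using odd_card_symdiff[of ?A ?B] assms by simp
qed

lemma pmult_simp: "pmult (s, a, b) (s', a', b') = ((s \<noteq> s') \<noteq> ip b a', vadd a a', vadd b b')"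
  unfolding pmult_def ip_def vadd_def by simp

definition goodset :: "pauli set \<Rightarrow> bool" where
  "goodset Q \<longleftrightarrow> (\<forall>s a b. (s,a,b) \<in> Q \<longrightarrow> fs a \<and> fs b \<and> (\<forall>s'. (s',a,b) \<in> Q)) \<and>
     pone \<in> Q \<and> (\<forall>x\<in>Q. \<forall>y\<in>Q. pmult x y \<in> Q)"

lemma good_group:
  assumes "goodset Q"
  shows "group \<lparr>carrier = Q, monoid.mult = pmult, one = pone\<rparr>"
proof (rule groupI, simp_all)
  show "\<And>x y. x \<in> Q \<Longrightarrow> y \<in> Q \<Longrightarrow> pmult x y \<in> Q" using assms unfolding goodset_def by blast
  show "pone \<in> Q" using assms unfolding goodset_def by blast
  show "\<And>x. x \<in> Q \<Longrightarrow> pmult pone x = x"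
    unfolding pone_def by (auto simp: pmult_simp)
  show "\<And>x y z. x \<in> Q \<Longrightarrow> y \<in> Q \<Longrightarrow> z \<in> Q \<Longrightarrow> pmult (pmult x y) z = pmult x (pmult y z)"
  proof -
    fix x y z assume xyz: "x \<in> Q" "y \<in> Q" "z \<in> Q"
    obtain s a b where x: "x = (s,a,b)" by (cases x) auto
    obtain s' a' b' where y: "y = (s',a',b')" by (cases y) auto
    obtain s'' a'' b'' where z: "z = (s'',a'',b'')" by (cases z) auto
    have f: "fs a" "fs b" "fs a'" "fs b'" "fs a''" "fs b''"
      using xyz x y z assms unfolding goodset_def by blast+
    show "pmult (pmult x y) z = pmult x (pmult y z)"
      using f by (auto simp: x y z pmult_simp ip_add ip_add2 vadd_assoc)
  qed
  show "\<And>x. x \<in> Q \<Longrightarrow> \<exists>y\<in>Q. pmult y x = pone"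
  proof -
    fix x assume xX: "x \<in> Q"
    obtain s a b where x: "x = (s,a,b)" by (cases x) auto
    have "(s \<noteq> ip b a, a, b) \<in> Q" using xX x assms unfolding goodset_def by blast
    moreover have "pmult (s \<noteq> ip b a, a, b) x = pone"
      unfolding x pmult_simp pone_def by auto
    ultimately show "\<exists>y\<in>Q. pmult y x = pone" by blast
  qed
qed




lemma dec_bound: "set_decode p \<subseteq> {..<\<mu>} \<longleftrightarrow> p < 2^\<mu>"
proof (induction \<mu> arbitrary: p)
  case 0
  show ?case
  proof
    assume "set_decode p \<subseteq> {..<0}"
    then have "set_decode p = {}" by auto
    then have "p = set_encode {}" by (metis set_decode_inverse)
    then show "p < 2^0" by simp
  next
    assume "p < 2^0" then show "set_decode p \<subseteq> {..<0}" by simp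
  qed
next
  case (Suc \<mu>)
  have "set_decode p \<subseteq> {..<Suc \<mu>} \<longleftrightarrow> set_decode (p div 2) \<subseteq> {..<\<mu>}"
  proof
    assume a: "set_decode p \<subseteq> {..<Suc \<mu>}"
    show "set_decode (p div 2) \<subseteq> {..<\<mu>}"
    proof
      fix k assume "k \<in> set_decode (p div 2)"
      then have "Suc k \<in> set_decode p" by simp
      then have "Suc k \<in> {..<Suc \<mu>}" using a by blast
      then show "k \<in> {..<\<mu>}" by simp
    qed
  next
    assume a: "set_decode (p div 2) \<subseteq> {..<\<mu>}"
    show "set_decode p \<subseteq> {..<Suc \<mu>}"
    proof
      fix i assume i: "i \<in> set_decode p"
      show "i \<in> {..<Suc \<mu>}"
      proof (cases i)
        case 0 then show ?thesis by simp
      next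
        case (Suc k)
        then have "k \<in> set_decode (p div 2)" using i by simp
        then show ?thesis using a Suc by auto
      qed
    qed
  qed
  also have "\<dots> \<longleftrightarrow> p div 2 < 2^\<mu>" by (rule Suc.IH)
  also have "\<dots> \<longleftrightarrow> p < 2^Suc \<mu>" by auto
  finally show ?case .
qed

lemma inj_set_decode: "inj set_decode"
  by (metis injI set_decode_inverse)

lemma dec_image: "set_decode ` {p. p < 2^\<mu>} = {A. A \<subseteq> {..<\<mu>}}"
proof
  show "set_decode ` {p. p < 2^\<mu>} \<subseteq> {A. A \<subseteq> {..<\<mu>}}" using dec_bound by auto
  show "{A. A \<subseteq> {..<\<mu>}} \<subseteq> set_decode ` {p. p < 2^\<mu>}"
  proof
    fix A assume "A \<in> {A. A \<subseteq> {..<\<mu>}}"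
    then have A: "A \<subseteq> {..<\<mu>}" by simp
    then have f: "finite A" using finite_subset by blast
    then have "set_decode (set_encode A) = A" by simp
    moreover have "set_encode A < 2^\<mu>" using A dec_bound[of "set_encode A" \<mu>] f by simp
    ultimately show "A \<in> set_decode ` {p. p < 2^\<mu>}" by (metis imageI mem_Collect_eq)
  qed
qed

lemma dec_card: "card {p. p < 2^\<mu> \<and> P (set_decode p)} = card {A. A \<subseteq> {..<\<mu>} \<and> P A}"
proof -
  have "{A. A \<subseteq> {..<\<mu>} \<and> P A} = set_decode ` {p. p < 2^\<mu> \<and> P (set_decode p)}"
  proof (intro equalityI subsetI)
    fix x assume "x \<in> {A. A \<subseteq> {..<\<mu>} \<and> P A}"
    then have x: "x \<in> set_decode ` {p. p < 2^\<mu>}" "P x" using dec_image[of \<mu>] by auto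
    then obtain p where "p < 2^\<mu>" "x = set_decode p" by auto
    then show "x \<in> set_decode ` {p. p < 2^\<mu> \<and> P (set_decode p)}" using x(2) by auto
  next
    fix x assume "x \<in> set_decode ` {p. p < 2^\<mu> \<and> P (set_decode p)}"
    then show "x \<in> {A. A \<subseteq> {..<\<mu>} \<and> P A}" using dec_bound by auto
  qed
  then show ?thesis
    by (metis (no_types, lifting) card_image inj_set_decode inj_on_subset subset_UNIV)
qed

lemma count_super:
  assumes "W \<subseteq> {..<\<mu>}"
  shows "card {p. p < 2^\<mu> \<and> W \<subseteq> set_decode p} = 2^(\<mu> - card W)"
proof -
  have "bij_betw (\<lambda>A. A - W) {A. A \<subseteq> {..<\<mu>} \<and> W \<subseteq> A} (Pow ({..<\<mu>} - W))"
    by (rule bij_betw_byWitness[where f'="\<lambda>B. B \<union> W"]) (use assms in auto)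
  then have "card {A. A \<subseteq> {..<\<mu>} \<and> W \<subseteq> A} = card (Pow ({..<\<mu>} - W))"
    by (rule bij_betw_same_card)
  also have "\<dots> = 2^(card ({..<\<mu>} - W))" by (simp add: card_Pow)
  also have "card ({..<\<mu>} - W) = \<mu> - card W"
    using assms by (simp add: card_Diff_subset finite_subset)
  finally show ?thesis using dec_card[of \<mu> "\<lambda>A. W \<subseteq> A"] by simp
qed

lemma rm_dual:
  fixes \<mu> r :: nat
  shows "S \<subseteq> Pow {..<\<mu>} \<Longrightarrow> S \<noteq> {} \<Longrightarrow>
   (\<forall>T. T \<subseteq> {..<\<mu>} \<longrightarrow> card T < r \<longrightarrow> even (card {P\<in>S. T \<subseteq> P})) \<Longrightarrow> 2^r \<le> card S"
proof (induction \<mu> arbitrary: S r)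
  case 0
  then have S: "S = {{}}" by auto
  show ?case
  proof (cases r)
    case 0 then show ?thesis using S by simp
  next
    case (Suc r')
    then have "even (card {P\<in>S. {} \<subseteq> P})" using "0.prems"(3) by auto
    then show ?thesis using S by simp
  qed
next
  case (Suc \<mu>)
  have finS: "finite S" using Suc.prems(1) finite_subset by blast
  define A where "A = {P\<in>S. \<mu> \<notin> P}"
  define S1 where "S1 = {P\<in>S. \<mu> \<in> P}"
  define B where "B = (\<lambda>P. P - {\<mu>}) ` S1"
  have A_sub: "A \<subseteq> Pow {..<\<mu>}"
  proof
    fix P assume "P \<in> A"
    then have "P \<subseteq> {..<Suc \<mu>}" "\<mu> \<notin> P" using Suc.prems(1) unfolding A_def by auto
    then show "P \<in> Pow {..<\<mu>}" using less_Suc_eq by fastforce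
  qed
  have B_sub: "B \<subseteq> Pow {..<\<mu>}"
  proof
    fix Q assume "Q \<in> B"
    then obtain P where "P \<in> S" "Q = P - {\<mu>}" unfolding B_def S1_def by auto
    then have "P \<subseteq> {..<Suc \<mu>}" "Q = P - {\<mu>}" using Suc.prems(1) by auto
    then show "Q \<in> Pow {..<\<mu>}" using less_Suc_eq by fastforce
  qed
  have finA: "finite A" "finite S1" "finite B" using finS unfolding A_def S1_def B_def by auto
  have injS1: "inj_on (\<lambda>P. P - {\<mu>}) S1"
    unfolding S1_def inj_on_def by (metis (no_types, lifting) insert_Diff mem_Collect_eq)
  have cB: "card B = card S1" unfolding B_def using injS1 by (simp add: card_image)
  have cS: "card S = card A + card B"
  proof -
    have "S = A \<union> S1" "A \<inter> S1 = {}" unfolding A_def S1_def by auto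
    then show ?thesis using finA cB by (simp add: card_Un_disjoint)
  qed
  have cBT: "card {P\<in>B. T \<subseteq> P} = card {P\<in>S1. T \<subseteq> P}" if "T \<subseteq> {..<\<mu>}" for T
  proof -
    have "{P\<in>B. T \<subseteq> P} = (\<lambda>P. P - {\<mu>}) ` {P\<in>S1. T \<subseteq> P}"
      unfolding B_def using that by auto
    moreover have "inj_on (\<lambda>P. P - {\<mu>}) {P\<in>S1. T \<subseteq> P}" using injS1 by (rule inj_on_subset) auto
    ultimately show ?thesis by (simp add: card_image)
  qed
  have c1: "card {P\<in>S. T \<subseteq> P} = card {P\<in>A. T \<subseteq> P} + card {P\<in>B. T \<subseteq> P}"
    if "T \<subseteq> {..<\<mu>}" for T
  proof -
    have "{P\<in>S. T \<subseteq> P} = {P\<in>A. T \<subseteq> P} \<union> {P\<in>S1. T \<subseteq> P}"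
         "{P\<in>A. T \<subseteq> P} \<inter> {P\<in>S1. T \<subseteq> P} = {}" unfolding A_def S1_def by auto
    then show ?thesis using cBT[OF that] finA by (simp add: card_Un_disjoint)
  qed
  have c2: "card {P\<in>S. insert \<mu> T \<subseteq> P} = card {P\<in>B. T \<subseteq> P}" if "T \<subseteq> {..<\<mu>}" for T
  proof -
    have "{P\<in>S. insert \<mu> T \<subseteq> P} = {P\<in>S1. T \<subseteq> P}" unfolding S1_def by auto
    then show ?thesis using cBT[OF that] by simp
  qed
  show ?case
  proof (cases r)
    case 0
    then show ?thesis using finS Suc.prems(2) by (simp add: Suc_leI card_gt_0_iff)
  next
    case (Suc r')
    have evAB: "even (card {P\<in>A. T \<subseteq> P} + card {P\<in>B. T \<subseteq> P})"
      if "T \<subseteq> {..<\<mu>}" "card T < r" for T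
    proof -
      have "T \<subseteq> {..<Suc \<mu>}" using that by auto
      then have "even (card {P\<in>S. T \<subseteq> P})" using Suc.prems(3) that(2) by blast
      then show ?thesis using c1[OF that(1)] by simp
    qed
    have evB: "even (card {P\<in>B. T \<subseteq> P})" if "T \<subseteq> {..<\<mu>}" "card T < r'" for T
    proof -
      have "insert \<mu> T \<subseteq> {..<Suc \<mu>}" using that by auto
      moreover have "card (insert \<mu> T) < r"
        using that Suc by (simp add: card_insert_if finite_subset)
      ultimately show ?thesis using Suc.prems(3) c2[OF that(1)] by metis
    qed
    have evA: "even (card {P\<in>A. T \<subseteq> P})" if "T \<subseteq> {..<\<mu>}" "card T < r'" for T
      using evAB[OF that(1)] evB[OF that] that(2) Suc by auto
    define D where "D = (A - B) \<union> (B - A)"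
    have evD: "even (card {P\<in>D. T \<subseteq> P})" if "T \<subseteq> {..<\<mu>}" "card T < r" for T
    proof -
      have "{P\<in>D. T \<subseteq> P} = ({P\<in>A. T \<subseteq> P} - {P\<in>B. T \<subseteq> P}) \<union> ({P\<in>B. T \<subseteq> P} - {P\<in>A. T \<subseteq> P})"
        unfolding D_def by auto
      then show ?thesis using odd_card_symdiff[of "{P\<in>A. T \<subseteq> P}" "{P\<in>B. T \<subseteq> P}"] finA
          evAB[OF that] by auto
    qed
    show ?thesis
    proof (cases "D = {}")
      case False
      have "D \<subseteq> Pow {..<\<mu>}" using A_sub B_sub unfolding D_def by auto
      then have "2^r \<le> card D" using Suc.IH[of D r] False evD by blast
      also have "card D \<le> card (A \<union> B)" unfolding D_def by (rule card_mono) (use finA in auto)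
      also have "\<dots> \<le> card A + card B" by (rule card_Un_le)
      finally show ?thesis using cS by simp
    next
      case True
      then have AB: "A = B" unfolding D_def by auto
      have "A \<noteq> {}"
      proof
        assume "A = {}"
        then have "S1 = {}" using AB unfolding B_def by auto
        then show False using \<open>A = {}\<close> Suc.prems(2) unfolding A_def S1_def by auto
      qed
      then have "2^r' \<le> card A" using Suc.IH[of A r'] A_sub evA by blast
      then show ?thesis using cS AB Suc by simp
    qed
  qed
qed




definition gen :: "nat \<Rightarrow> nat \<times> nat set \<Rightarrow> nat \<Rightarrow> bool" where
  "gen \<mu> i j = ((j div 2^\<mu> = fst i \<or> j div 2^\<mu> = Suc (fst i)) \<and> snd i \<subseteq> set_decode (j mod 2^\<mu>))"

definition Tset :: "nat \<Rightarrow> nat \<Rightarrow> nat set set" where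
  "Tset \<mu> r = {T. T \<subseteq> {..<\<mu>} \<and> card T \<le> r}"

definition bc :: "nat \<Rightarrow> (nat \<Rightarrow> bool) \<Rightarrow> nat \<Rightarrow> nat set \<Rightarrow> nat" where
  "bc \<mu> z t T = card {p. p < 2^\<mu> \<and> z (t * 2^\<mu> + p) \<and> T \<subseteq> set_decode p}"

lemma divmod_blk:
  fixes n :: nat
  assumes "p < n"
  shows "(a * n + p) div n = a" "(a * n + p) mod n = p"
  using assms by auto

lemma blk_card:
  fixes n :: nat
  assumes "0 < n"
  shows "card {j. j div n = t \<and> Q j} = card {p. p < n \<and> Q (t * n + p)}"
proof -
  have "bij_betw (\<lambda>p. t * n + p) {p. p < n \<and> Q (t * n + p)} {j. j div n = t \<and> Q j}"
  proof (rule bij_betw_byWitness[where f'="\<lambda>j. j mod n"])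
    show "\<forall>a\<in>{p. p < n \<and> Q (t * n + p)}. (t * n + a) mod n = a" by auto
    show "\<forall>a'\<in>{j. j div n = t \<and> Q j}. t * n + a' mod n = a'"
      by (metis (mono_tags, lifting) div_mult_mod_eq mem_Collect_eq mult.commute)
    show "(\<lambda>p. t * n + p) ` {p. p < n \<and> Q (t * n + p)} \<subseteq> {j. j div n = t \<and> Q j}" by auto
    show "(\<lambda>j. j mod n) ` {j. j div n = t \<and> Q j} \<subseteq> {p. p < n \<and> Q (t * n + p)}"
      using assms by (auto simp: mult.commute)
  qed
  then show ?thesis by (metis bij_betw_same_card)
qed

lemma blk_card_prod:
  fixes n :: nat
  assumes "0 < n" "finite K"
  shows "card {j. j div n \<in> K \<and> P (j mod n)} = card K * card {p. p < n \<and> P p}"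
proof -
  have "bij_betw (\<lambda>(t, p). t * n + p) (K \<times> {p. p < n \<and> P p}) {j. j div n \<in> K \<and> P (j mod n)}"
  proof (rule bij_betw_byWitness[where f'="\<lambda>j. (j div n, j mod n)"])
    show "\<forall>a\<in>K \<times> {p. p < n \<and> P p}. (case (case a of (t, p) \<Rightarrow> t * n + p) of j \<Rightarrow> (j div n, j mod n)) = a"
      by auto
    show "\<forall>a'\<in>{j. j div n \<in> K \<and> P (j mod n)}. (case (a' div n, a' mod n) of (t, p) \<Rightarrow> t * n + p) = a'"
      by (simp add: mult.commute)
    show "(\<lambda>(t, p). t * n + p) ` (K \<times> {p. p < n \<and> P p}) \<subseteq> {j. j div n \<in> K \<and> P (j mod n)}" by auto
    show "(\<lambda>j. (j div n, j mod n)) ` {j. j div n \<in> K \<and> P (j mod n)} \<subseteq> K \<times> {p. p < n \<and> P p}"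
      using assms by auto
  qed
  then have "card {j. j div n \<in> K \<and> P (j mod n)} = card (K \<times> {p. p < n \<and> P p})"
    by (simp add: bij_betw_same_card)
  then show ?thesis by (simp add: card_cartesian_product)
qed

lemma fs_gen: "fs (gen \<mu> i)"
proof -
  have "{j. gen \<mu> i j} \<subseteq> {..<(Suc (Suc (fst i))) * 2^\<mu>}"
  proof
    fix j assume "j \<in> {j. gen \<mu> i j}"
    then have "j div 2^\<mu> < Suc (Suc (fst i))" unfolding gen_def by auto
    then show "j \<in> {..<(Suc (Suc (fst i))) * 2^\<mu>}" by (simp add: div_less_iff_less_mult)
  qed
  then show ?thesis unfolding fs_def using finite_subset by blast
qed

lemma enc_all: "set_encode {..<\<mu>} = 2^\<mu> - 1"
proof (induction \<mu>)
  case 0 then show ?case by simp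
next
  case (Suc \<mu>)
  have "{..<Suc \<mu>} = insert \<mu> {..<\<mu>}" by auto
  then have "set_encode {..<Suc \<mu>} = 2^\<mu> + set_encode {..<\<mu>}" by simp
  then show ?case using Suc by simp
qed

definition ptop :: "nat \<Rightarrow> nat" where "ptop \<mu> = set_encode {..<\<mu>}"

lemma ptop2: "set_decode (ptop \<mu>) = {..<\<mu>}"
  unfolding ptop_def by simp

lemma ptop1: "ptop \<mu> < 2^\<mu>"
  using dec_bound[of "ptop \<mu>" \<mu>] ptop2 by simp

lemma ip_gen_gen:
  assumes "snd i \<in> Tset \<mu> r" "snd i' \<in> Tset \<mu> r" "2 * r < \<mu>"
  shows "\<not> ip (gen \<mu> i) (gen \<mu> i')"
proof -
  obtain s T where i: "i = (s, T)" by (cases i)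
  obtain s' U where i': "i' = (s', U)" by (cases i')
  let ?K = "{s, Suc s} \<inter> {s', Suc s'}"
  have "{j. gen \<mu> i j \<and> gen \<mu> i' j} = {j. j div 2^\<mu> \<in> ?K \<and> T \<union> U \<subseteq> set_decode (j mod 2^\<mu>)}"
    unfolding gen_def i i' by auto
  then have "card {j. gen \<mu> i j \<and> gen \<mu> i' j} = card ?K * card {p. p < 2^\<mu> \<and> T \<union> U \<subseteq> set_decode p}"
    using blk_card_prod[of "2^\<mu>" ?K] by simp
  also have "card {p. p < 2^\<mu> \<and> T \<union> U \<subseteq> set_decode p} = 2^(\<mu> - card (T \<union> U))"
    using assms(1,2) unfolding i i' Tset_def by (intro count_super) auto
  finally have c: "card {j. gen \<mu> i j \<and> gen \<mu> i' j} = card ?K * 2^(\<mu> - card (T \<union> U))" .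
  have "card (T \<union> U) \<le> card T + card U" by (rule card_Un_le)
  then have "card (T \<union> U) < \<mu>" using assms unfolding i i' Tset_def by auto
  then have "even (2^(\<mu> - card (T \<union> U)) :: nat)" by simp
  then show ?thesis unfolding ip_def using c by simp
qed

lemma ip_z_gen:
  assumes "fs z"
  shows "ip z (gen \<mu> (t, T)) = odd (bc \<mu> z t T + bc \<mu> z (Suc t) T)"
proof -
  let ?Q = "\<lambda>j. z j \<and> T \<subseteq> set_decode (j mod 2^\<mu>)"
  have e: "{j. z j \<and> gen \<mu> (t, T) j} = {j. j div 2^\<mu> = t \<and> ?Q j} \<union> {j. j div 2^\<mu> = Suc t \<and> ?Q j}"
    unfolding gen_def by auto
  have f: "finite {j. j div 2^\<mu> = t \<and> ?Q j}" "finite {j. j div 2^\<mu> = Suc t \<and> ?Q j}"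
    using assms unfolding fs_def by (auto intro: finite_subset)
  have d: "{j. j div 2^\<mu> = t \<and> ?Q j} \<inter> {j. j div 2^\<mu> = Suc t \<and> ?Q j} = {}" by auto
  have b: "card {j. j div 2^\<mu> = t' \<and> ?Q j} = bc \<mu> z t' T" for t'
  proof -
    have "card {j. j div 2^\<mu> = t' \<and> ?Q j} = card {p. p < 2^\<mu> \<and> ?Q (t' * 2^\<mu> + p)}"
      by (rule blk_card) simp
    also have "{p. p < 2^\<mu> \<and> ?Q (t' * 2^\<mu> + p)} = {p. p < 2^\<mu> \<and> z (t' * 2^\<mu> + p) \<and> T \<subseteq> set_decode p}"
      by auto
    finally show ?thesis unfolding bc_def .
  qed
  show ?thesis unfolding ip_def e using card_Un_disjoint[OF f d] b by simp
qed




lemma lower_bound: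
  assumes fz: "fs z" and nz: "z j0"
    and orth: "\<forall>t. \<forall>T\<in>Tset \<mu> r. \<not> ip z (gen \<mu> (t, T))"
  shows "2^(Suc r) \<le> card {j. z j}"
proof -
  let ?n = "2^\<mu> :: nat"
  have fin: "finite {j. z j}" using fz unfolding fs_def .
  obtain M where M: "\<forall>j\<in>{j. z j}. j < M" using finite_nat_bounded[OF fin] by (auto simp: lessThan_def)
  have Mb: "\<forall>j. z j \<longrightarrow> j < M * ?n"
  proof (intro allI impI)
    fix j assume "z j"
    then have "j < M" using M by auto
    also have "M \<le> M * ?n" by simp
    finally show "j < M * ?n" .
  qed
  have ev: "even (bc \<mu> z t T)" if T: "T \<in> Tset \<mu> r" for t T
  proof -
    have "\<forall>t. M - t = d \<longrightarrow> even (bc \<mu> z t T)" for d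
    proof (induction d)
      case 0
      show ?case
      proof (intro allI impI)
        fix t assume "M - t = 0"
        then have "M \<le> t" by simp
        then have "M * ?n \<le> t * ?n" by simp
        have "\<not> z (t * ?n + p)" for p
        proof
          assume "z (t * ?n + p)"
          then have "t * ?n + p < M * ?n" using Mb by blast
          then show False using \<open>M * ?n \<le> t * ?n\<close> by linarith
        qed
        then have "{p. p < ?n \<and> z (t * ?n + p) \<and> T \<subseteq> set_decode p} = {}" by auto
        then show "even (bc \<mu> z t T)" unfolding bc_def by (metis card.empty even_zero)
      qed
    next
      case (Suc d)
      show ?case
      proof (intro allI impI)
        fix t assume "M - t = Suc d"
        then have "M - Suc t = d" by simp
        then have "even (bc \<mu> z (Suc t) T)" using Suc.IH by blast
        moreover have "even (bc \<mu> z t T + bc \<mu> z (Suc t) T)"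
          using orth T ip_z_gen[OF fz, of \<mu> t T] by auto
        ultimately show "even (bc \<mu> z t T)" by simp
      qed
    qed
    then show ?thesis by blast
  qed
  define t0 where "t0 = j0 div ?n"
  define q0 where "q0 = j0 mod ?n"
  have j0: "j0 = t0 * ?n + q0" "q0 < ?n" unfolding t0_def q0_def by (metis div_mult_mod_eq) simp
  define S where "S = set_decode ` {p. p < ?n \<and> z (t0 * ?n + p)}"
  have Ssub: "S \<subseteq> Pow {..<\<mu>}" unfolding S_def using dec_bound by auto
  have Sne: "S \<noteq> {}" unfolding S_def using j0 nz by auto
  have cond: "\<forall>T. T \<subseteq> {..<\<mu>} \<longrightarrow> card T < Suc r \<longrightarrow> even (card {P\<in>S. T \<subseteq> P})"
  proof (intro allI impI)
    fix T assume T: "T \<subseteq> {..<\<mu>}" "card T < Suc r"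
    then have TT: "T \<in> Tset \<mu> r" unfolding Tset_def by auto
    have "{P\<in>S. T \<subseteq> P} = set_decode ` {p. p < ?n \<and> z (t0 * ?n + p) \<and> T \<subseteq> set_decode p}"
      unfolding S_def by auto
    then have "card {P\<in>S. T \<subseteq> P} = bc \<mu> z t0 T"
      unfolding bc_def by (metis (no_types, lifting) card_image inj_set_decode inj_on_subset subset_UNIV)
    then show "even (card {P\<in>S. T \<subseteq> P})" using ev[OF TT] by simp
  qed
  have "2^(Suc r) \<le> card S" using rm_dual[OF Ssub Sne cond] .
  also have "card S = card {p. p < ?n \<and> z (t0 * ?n + p)}"
    unfolding S_def by (metis (no_types, lifting) card_image inj_set_decode inj_on_subset subset_UNIV)
  also have "\<dots> = card ((\<lambda>p. t0 * ?n + p) ` {p. p < ?n \<and> z (t0 * ?n + p)})"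
    by (rule card_image[symmetric]) (simp add: inj_on_def)
  also have "\<dots> \<le> card {j. z j}" by (rule card_mono[OF fin]) auto
  finally show ?thesis .
qed


definition shv :: "nat \<Rightarrow> (nat \<Rightarrow> bool) \<Rightarrow> nat \<Rightarrow> bool" where
  "shv d u = (\<lambda>j. d \<le> j \<and> u (j - d))"

lemma pshift_eq: "pshift d (s, a, b) = (s, shv d a, shv d b)"
  unfolding pshift_def shv_def by simp

lemma gen_shift: "gen \<mu> (s + t, T) j = (t * 2^\<mu> \<le> j \<and> gen \<mu> (s, T) (j - t * 2^\<mu>))"
proof (cases "t * 2^\<mu> \<le> j")
  case True
  then obtain q where q: "j = t * 2^\<mu> + q" using le_Suc_ex by blast
  have "(t * 2^\<mu> + q) div 2^\<mu> = t + q div 2^\<mu>" by simp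
  moreover have "(t * 2^\<mu> + q) mod 2^\<mu> = q mod 2^\<mu>" by simp
  ultimately show ?thesis unfolding gen_def q by auto
next
  case False
  then have "j div 2^\<mu> < t" by (simp add: div_less_iff_less_mult)
  then show ?thesis unfolding gen_def using False by auto
qed

lemma vsum_shift:
  "shv (t * 2^\<mu>) (vsum (gen \<mu>) C) = vsum (gen \<mu>) ((\<lambda>i. (fst i + t, snd i)) ` C)"
proof
  fix j
  let ?sh = "\<lambda>i::nat \<times> nat set. (fst i + t, snd i)"
  have inj: "inj ?sh" by (auto simp: inj_on_def prod_eq_iff)
  have "{i \<in> ?sh ` C. gen \<mu> i j} = ?sh ` {i\<in>C. gen \<mu> (?sh i) j}" by auto
  then have c: "card {i \<in> ?sh ` C. gen \<mu> i j} = card {i\<in>C. gen \<mu> (?sh i) j}"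
    using inj by (metis (no_types, lifting) card_image inj_on_subset subset_UNIV)
  have g: "gen \<mu> (?sh i) j = (t * 2^\<mu> \<le> j \<and> gen \<mu> i (j - t * 2^\<mu>))" for i
    using gen_shift[of \<mu> "fst i" t "snd i" j] by simp
  show "shv (t * 2^\<mu>) (vsum (gen \<mu>) C) j = vsum (gen \<mu>) (?sh ` C) j"
  proof (cases "t * 2^\<mu> \<le> j")
    case True
    then show ?thesis unfolding vsum_def shv_def c g by simp
  next
    case False
    then have "{i\<in>C. t * 2^\<mu> \<le> j \<and> gen \<mu> i (j - t * 2^\<mu>)} = {}" by simp
    then show ?thesis unfolding vsum_def shv_def c g using False by simp
  qed
qed


lemma gen_indep:
  assumes "finite J" "J \<subseteq> UNIV \<times> Tset \<mu> r" "vsum (gen \<mu>) J = zv"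
  shows "J = {}"
proof (rule ccontr)
  assume ne: "J \<noteq> {}"
  let ?n = "2^\<mu> :: nat"
  define sm where "sm = Max (fst ` J)"
  have smJ: "sm \<in> fst ` J" unfolding sm_def using assms(1) ne by simp
  have sle: "\<forall>i\<in>J. fst i \<le> sm" unfolding sm_def using assms(1) by simp
  define JJ where "JJ = {T. (sm, T) \<in> J}"
  have JJne: "JJ \<noteq> {}" using smJ unfolding JJ_def by force
  have JJfin: "finite JJ"
  proof -
    have "JJ \<subseteq> snd ` J" unfolding JJ_def by force
    then show ?thesis using assms(1) finite_subset by blast
  qed
  define k where "k = Min (card ` JJ)"
  have "k \<in> card ` JJ" unfolding k_def using JJne JJfin by simp
  then obtain T0 where T0: "T0 \<in> JJ" "card T0 = k" by auto
  have kmin: "\<forall>T\<in>JJ. k \<le> card T" unfolding k_def using JJfin by simp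
  have T0sub: "T0 \<subseteq> {..<\<mu>}" using T0 assms(2) unfolding JJ_def Tset_def by auto
  then have T0fin: "finite T0" using finite_subset by blast
  define p where "p = set_encode T0"
  have pd: "set_decode p = T0" unfolding p_def using T0fin by simp
  have pl: "p < ?n" using dec_bound[of p \<mu>] pd T0sub by simp
  define j where "j = Suc sm * ?n + p"
  have jd: "j div ?n = Suc sm" "j mod ?n = p" unfolding j_def by (rule divmod_blk[OF pl])+
  have "{i\<in>J. gen \<mu> i j} = {(sm, T0)}"
  proof
    show "{i\<in>J. gen \<mu> i j} \<subseteq> {(sm, T0)}"
    proof
      fix i assume i: "i \<in> {i\<in>J. gen \<mu> i j}"
      obtain s T where iT: "i = (s, T)" by (cases i)
      have "s \<le> sm" using sle i iT by auto
      then have s: "s = sm" using i iT jd unfolding gen_def by auto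
      have TT0: "T \<subseteq> T0" using i iT jd pd unfolding gen_def by auto
      have "T \<in> JJ" using i iT s unfolding JJ_def by auto
      then have "card T0 \<le> card T" using kmin T0 by auto
      then have "T = T0" using TT0 T0fin by (metis card_subset_eq card_mono antisym finite_subset)
      then show "i \<in> {(sm, T0)}" using iT s by simp
    qed
    show "{(sm, T0)} \<subseteq> {i\<in>J. gen \<mu> i j}"
      using T0 jd pd unfolding JJ_def gen_def by auto
  qed
  then have "vsum (gen \<mu>) J j" unfolding vsum_def by simp
  then show False using assms(3) by simp
qed


definition col :: "nat \<Rightarrow> nat \<Rightarrow> nat \<Rightarrow> bool" where
  "col \<mu> p = (\<lambda>j. j mod 2^\<mu> = p)"

lemma ip_gen_col: "\<not> ip (gen \<mu> i) (col \<mu> p)"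
proof -
  obtain s T where i: "i = (s, T)" by (cases i)
  have "{j. gen \<mu> i j \<and> col \<mu> p j} = {j. j div 2^\<mu> \<in> {s, Suc s} \<and> (\<lambda>q. T \<subseteq> set_decode q \<and> q = p) (j mod 2^\<mu>)}"
    unfolding gen_def col_def i by auto
  then have "card {j. gen \<mu> i j \<and> col \<mu> p j} = card {s, Suc s} * card {q. q < 2^\<mu> \<and> T \<subseteq> set_decode q \<and> q = p}"
    using blk_card_prod[of "2^\<mu>" "{s, Suc s}" "\<lambda>q. T \<subseteq> set_decode q \<and> q = p"] by (simp only:) simp
  moreover have "card {s, Suc s} = 2" by simp
  ultimately show ?thesis unfolding ip_def by simp
qed

definition wv :: "nat \<Rightarrow> nat \<Rightarrow> nat \<Rightarrow> bool" where
  "wv \<mu> r = (\<lambda>j. j < 2^\<mu> \<and> {..<\<mu> - Suc r} \<subseteq> set_decode j)"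

lemma fs_wv: "fs (wv \<mu> r)"
  unfolding fs_def wv_def by (rule finite_subset[of _ "{..<2^\<mu>}"]) auto

lemma card_wv: "Suc r \<le> \<mu> \<Longrightarrow> card {j. wv \<mu> r j} = 2^(Suc r)"
  unfolding wv_def using count_super[of "{..<\<mu> - Suc r}" \<mu>] by simp

lemma ip_wv_gen:
  assumes "T \<in> Tset \<mu> r" "2 * r < \<mu>"
  shows "\<not> ip (wv \<mu> r) (gen \<mu> (t, T))"
proof -
  let ?W = "{..<\<mu> - Suc r}"
  let ?K = "{0} \<inter> {t, Suc t}"
  have "{j. wv \<mu> r j \<and> gen \<mu> (t, T) j} = {j. j div 2^\<mu> \<in> ?K \<and> ?W \<union> T \<subseteq> set_decode (j mod 2^\<mu>)}"
    unfolding wv_def gen_def by (auto simp: div_eq_0_iff)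
  then have c: "card {j. wv \<mu> r j \<and> gen \<mu> (t, T) j} = card ?K * card {p. p < 2^\<mu> \<and> ?W \<union> T \<subseteq> set_decode p}"
    using blk_card_prod[of "2^\<mu>" ?K] by simp
  have TT: "T \<subseteq> {..<\<mu>}" "card T \<le> r" using assms(1) unfolding Tset_def by auto
  have "card (?W \<union> T) \<le> card ?W + card T" by (rule card_Un_le)
  then have cl: "card (?W \<union> T) < \<mu>" using TT assms(2) by simp
  have "card {p. p < 2^\<mu> \<and> ?W \<union> T \<subseteq> set_decode p} = 2^(\<mu> - card (?W \<union> T))"
    by (rule count_super) (use TT in auto)
  then have "even (card {p. p < 2^\<mu> \<and> ?W \<union> T \<subseteq> set_decode p})" using cl by simp
  then show ?thesis unfolding ip_def c by simp
qed

lemma ip_wv_col: "ip (wv \<mu> r) (col \<mu> (ptop \<mu>))"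
proof -
  have "{j. wv \<mu> r j \<and> col \<mu> (ptop \<mu>) j} = {ptop \<mu>}"
  proof (intro equalityI subsetI)
    fix j assume "j \<in> {j. wv \<mu> r j \<and> col \<mu> (ptop \<mu>) j}"
    then have "j < 2^\<mu>" "j mod 2^\<mu> = ptop \<mu>" unfolding wv_def col_def by auto
    then show "j \<in> {ptop \<mu>}" by simp
  next
    fix j assume "j \<in> {ptop \<mu>}"
    then have j: "j = ptop \<mu>" by simp
    have "{..<\<mu> - Suc r} \<subseteq> set_decode (ptop \<mu>)" unfolding ptop2 by auto
    then show "j \<in> {j. wv \<mu> r j \<and> col \<mu> (ptop \<mu>) j}"
      unfolding wv_def col_def j using ptop1[of \<mu>] by simp
  qed
  then show ?thesis unfolding ip_def by simp
qed




definition gspan :: "nat \<Rightarrow> (nat \<times> nat set) set \<Rightarrow> (nat \<Rightarrow> bool) set" where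
  "gspan \<mu> C = {vsum (gen \<mu>) D | D. D \<subseteq> C \<and> finite D}"

definition css :: "(nat \<Rightarrow> bool) set \<Rightarrow> pauli set" where
  "css U = {(False, a, b) | a b. a \<in> U \<and> b \<in> U}"

definition px :: "(nat \<Rightarrow> bool) \<Rightarrow> pauli" where "px a = (False, a, zv)"
definition pz :: "(nat \<Rightarrow> bool) \<Rightarrow> pauli" where "pz b = (False, zv, b)"

lemma zv_span: "zv \<in> gspan \<mu> C"
  unfolding gspan_def by (rule CollectI, rule exI[of _ "{}"]) simp

lemma gen_span: "i \<in> C \<Longrightarrow> gen \<mu> i \<in> gspan \<mu> C"
  unfolding gspan_def by (rule CollectI, rule exI[of _ "{i}"]) (simp add: vsum_insert)

lemma gspan_mono: "C \<subseteq> C' \<Longrightarrow> gspan \<mu> C \<subseteq> gspan \<mu> C'"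
  unfolding gspan_def by blast

lemma gspan_add: "u \<in> gspan \<mu> C \<Longrightarrow> v \<in> gspan \<mu> C \<Longrightarrow> vadd u v \<in> gspan \<mu> C"
proof -
  assume "u \<in> gspan \<mu> C" "v \<in> gspan \<mu> C"
  then obtain D D' where "u = vsum (gen \<mu>) D" "D \<subseteq> C" "finite D"
    "v = vsum (gen \<mu>) D'" "D' \<subseteq> C" "finite D'" unfolding gspan_def by auto
  then show ?thesis unfolding gspan_def using vsum_add[of D D' "gen \<mu>"]
    by (intro CollectI exI[of _ "(D - D') \<union> (D' - D)"]) auto
qed

lemma gspan_fs: "u \<in> gspan \<mu> C \<Longrightarrow> fs u"
  unfolding gspan_def using fs_vsum fs_gen by blast

lemma gspan_orth_gen:
  assumes "u \<in> gspan \<mu> C" "C \<subseteq> UNIV \<times> Tset \<mu> r" "snd i \<in> Tset \<mu> r" "2 * r < \<mu>"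
  shows "\<not> ip u (gen \<mu> i)"
proof -
  obtain D where D: "u = vsum (gen \<mu>) D" "D \<subseteq> C" "finite D" using assms(1) unfolding gspan_def by auto
  have "\<forall>i'\<in>D. \<not> ip (gen \<mu> i') (gen \<mu> i)"
  proof
    fix i' assume "i' \<in> D"
    then have "snd i' \<in> Tset \<mu> r" using D(2) assms(2) by auto
    then show "\<not> ip (gen \<mu> i') (gen \<mu> i)" using ip_gen_gen assms(3,4) by blast
  qed
  then show ?thesis unfolding D(1)
    by (intro ip_vsum_zero) (use D fs_gen in auto)
qed

lemma gspan_orth:
  assumes "u \<in> gspan \<mu> C" "v \<in> gspan \<mu> C'" "C \<subseteq> UNIV \<times> Tset \<mu> r" "C' \<subseteq> UNIV \<times> Tset \<mu> r" "2 * r < \<mu>"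
  shows "\<not> ip u v"
proof -
  obtain D where D: "v = vsum (gen \<mu>) D" "D \<subseteq> C'" "finite D" using assms(2) unfolding gspan_def by auto
  have "\<not> ip v u" unfolding D(1)
  proof (rule ip_vsum_zero)
    show "\<forall>i\<in>D. \<not> ip (gen \<mu> i) u"
    proof
      fix i assume "i \<in> D"
      then have "snd i \<in> Tset \<mu> r" using D(2) assms(4) by auto
      then have "\<not> ip u (gen \<mu> i)" using gspan_orth_gen[OF assms(1) assms(3) _ assms(5)] by blast
      then show "\<not> ip (gen \<mu> i) u" using ip_sym[of u "gen \<mu> i"] by simp
    qed
  qed (use D fs_gen in auto)
  then show ?thesis using ip_sym[of u v] by simp
qed

lemma pmult_css: "pmult (False, a, b) (False, a', b') = (ip b a', vadd a a', vadd b b')"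
  by (simp add: pmult_simp)

lemma css_comm:
  assumes "x \<in> css (gspan \<mu> C)" "y \<in> css (gspan \<mu> C')" "C \<subseteq> UNIV \<times> Tset \<mu> r" "C' \<subseteq> UNIV \<times> Tset \<mu> r" "2 * r < \<mu>"
  shows "pmult x y = pmult y x" "pmult x y = (False, vadd (fst (snd x)) (fst (snd y)), vadd (snd (snd x)) (snd (snd y)))"
proof -
  obtain a b where x: "x = (False, a, b)" "a \<in> gspan \<mu> C" "b \<in> gspan \<mu> C" using assms(1) unfolding css_def by blast
  obtain a' b' where y: "y = (False, a', b')" "a' \<in> gspan \<mu> C'" "b' \<in> gspan \<mu> C'" using assms(2) unfolding css_def by blast
  have o1: "\<not> ip b a'" using gspan_orth[OF x(3) y(2) assms(3-5)] .
  have o2: "\<not> ip b' a" using gspan_orth[OF y(3) x(2) assms(4,3,5)] .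
  show "pmult x y = pmult y x" unfolding x y pmult_css using o1 o2 by (simp add: vadd_comm)
  show "pmult x y = (False, vadd (fst (snd x)) (fst (snd y)), vadd (snd (snd x)) (snd (snd y)))"
    unfolding x y pmult_css using o1 by simp
qed

definition QN :: "nat \<Rightarrow> pauli set" where
  "QN N = {(s, a, b). \<forall>j\<ge>N. \<not> a j \<and> \<not> b j}"
definition QI :: "pauli set" where
  "QI = {(s, a, b). finite {j. a j \<or> b j}}"

lemma Pt_eq: "Pt n m' t = \<lparr>carrier = QN ((t + 1) * n + m'), monoid.mult = pmult, one = pone\<rparr>"
  unfolding Pt_def pauli_group_def QN_def by simp

lemma Pinf_eq: "pauli_inf = \<lparr>carrier = QI, monoid.mult = pmult, one = pone\<rparr>"
  unfolding pauli_inf_def QI_def by simp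

lemma good_QN: "goodset (QN N)"
  unfolding goodset_def
proof (intro conjI allI impI ballI)
  fix s and a b :: "nat \<Rightarrow> bool" assume "(s, a, b) \<in> QN N"
  then have h: "\<forall>j\<ge>N. \<not> a j \<and> \<not> b j" unfolding QN_def by simp
  have "{j. a j} \<subseteq> {..<N}" "{j. b j} \<subseteq> {..<N}" using h not_le by auto
  then show "fs a" "fs b" unfolding fs_def by (auto intro: finite_subset)
  show "\<And>s'. (s', a, b) \<in> QN N" using h unfolding QN_def by simp
next
  show "pone \<in> QN N" unfolding pone_def QN_def by simp
next
  fix x y assume xy: "x \<in> QN N" "y \<in> QN N"
  obtain s a b where x: "x = (s, a, b)" by (cases x)
  obtain s' a' b' where y: "y = (s', a', b')" by (cases y)
  show "pmult x y \<in> QN N" using xy unfolding x y QN_def by (simp add: pmult_simp vadd_def)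
qed

lemma good_QI: "goodset QI"
  unfolding goodset_def
proof (intro conjI allI impI ballI)
  fix s and a b :: "nat \<Rightarrow> bool" assume "(s, a, b) \<in> QI"
  then have h: "finite {j. a j \<or> b j}" unfolding QI_def by simp
  show "fs a" "fs b" unfolding fs_def using h by (auto intro: finite_subset)
  show "\<And>s'. (s', a, b) \<in> QI" using h unfolding QI_def by simp
next
  show "pone \<in> QI" unfolding pone_def QI_def by simp
next
  fix x y assume xy: "x \<in> QI" "y \<in> QI"
  obtain s a b where x: "x = (s, a, b)" by (cases x)
  obtain s' a' b' where y: "y = (s', a', b')" by (cases y)
  have "{j. vadd a a' j \<or> vadd b b' j} \<subseteq> {j. a j \<or> b j} \<union> {j. a' j \<or> b' j}"
    unfolding vadd_def by auto
  moreover have "finite ({j. a j \<or> b j} \<union> {j. a' j \<or> b' j})" using xy unfolding x y QI_def by simp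
  ultimately show "pmult x y \<in> QI" unfolding x y QI_def pmult_simp by (auto intro: finite_subset)
qed

definition Zc :: "pauli set" where "Zc = {(s, zv, zv) | s. True}"

lemma center_eq:
  assumes "goodset Q"
    and sing: "\<forall>s a b j. (s, a, b) \<in> Q \<longrightarrow> (a j \<or> b j) \<longrightarrow>
       (False, (\<lambda>i. i = j), zv) \<in> Q \<and> (False, zv, (\<lambda>i. i = j)) \<in> Q"
    and zc: "\<forall>s. (s, zv, zv) \<in> Q"
  shows "gcenter \<lparr>carrier = Q, monoid.mult = pmult, one = pone\<rparr> = Zc"
proof (intro equalityI subsetI)
  fix x assume x: "x \<in> gcenter \<lparr>carrier = Q, monoid.mult = pmult, one = pone\<rparr>"
  obtain s a b where xe: "x = (s, a, b)" by (cases x)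
  have xQ: "x \<in> Q" and cm: "\<forall>y\<in>Q. pmult x y = pmult y x" using x unfolding gcenter_def by auto
  have ab: "\<not> a j \<and> \<not> b j" for j
  proof (rule ccontr)
    assume "\<not> (\<not> a j \<and> \<not> b j)"
    then have "a j \<or> b j" by simp
    then have q: "(False, (\<lambda>i. i = j), zv) \<in> Q" "(False, zv, (\<lambda>i. i = j)) \<in> Q"
      using sing xQ xe by blast+
    have "{i. b i \<and> i = j} = (if b j then {j} else {})" by auto
    then have e1: "ip b (\<lambda>i. i = j) = b j" unfolding ip_def by simp
    have "{i. i = j \<and> a i} = (if a j then {j} else {})" by auto
    then have e2: "ip (\<lambda>i. i = j) a = a j" unfolding ip_def by simp
    have "\<not> b j" using cm q(1) e1 unfolding xe by (auto simp: pmult_simp)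
    moreover have "\<not> a j" using cm q(2) e2 unfolding xe by (auto simp: pmult_simp)
    ultimately show False using \<open>a j \<or> b j\<close> by simp
  qed
  then have "a = zv" "b = zv" by auto
  then show "x \<in> Zc" unfolding Zc_def xe by simp
next
  fix x assume "x \<in> Zc"
  then obtain s where x: "x = (s, zv, zv)" unfolding Zc_def by auto
  show "x \<in> gcenter \<lparr>carrier = Q, monoid.mult = pmult, one = pone\<rparr>"
    unfolding gcenter_def using zc x by (auto simp: pmult_simp)
qed

lemma center_Pt: "gcenter (Pt n m' t) = Zc"
  unfolding Pt_eq
proof (rule center_eq[OF good_QN])
  show "\<forall>s a b j. (s, a, b) \<in> QN ((t + 1) * n + m') \<longrightarrow> (a j \<or> b j) \<longrightarrow>
       (False, (\<lambda>i. i = j), zv) \<in> QN ((t + 1) * n + m') \<and> (False, zv, (\<lambda>i. i = j)) \<in> QN ((t + 1) * n + m')"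
  proof (intro allI impI)
    fix s a b j assume "(s, a, b) \<in> QN ((t + 1) * n + m')" "a j \<or> b j"
    then have "j < (t + 1) * n + m'" unfolding QN_def using not_le by auto
    then show "(False, (\<lambda>i. i = j), zv) \<in> QN ((t + 1) * n + m') \<and> (False, zv, (\<lambda>i. i = j)) \<in> QN ((t + 1) * n + m')"
      unfolding QN_def by auto
  qed
  show "\<forall>s. (s, zv, zv) \<in> QN ((t + 1) * n + m')" unfolding QN_def by simp
qed

lemma center_Pinf: "gcenter pauli_inf = Zc"
  unfolding Pinf_eq
proof (rule center_eq[OF good_QI])
  show "\<forall>s a b j. (s, a, b) \<in> QI \<longrightarrow> (a j \<or> b j) \<longrightarrow>
       (False, (\<lambda>i. i = j), zv) \<in> QI \<and> (False, zv, (\<lambda>i. i = j)) \<in> QI"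
    unfolding QI_def by simp
  show "\<forall>s. (s, zv, zv) \<in> QI" unfolding QI_def by simp
qed




lemma pone_eq: "pone = (False, zv, zv)" unfolding pone_def by simp

lemma css_subgroup:
  assumes good: "goodset Q" and sub: "css (gspan \<mu> C) \<subseteq> Q"
    and C: "C \<subseteq> UNIV \<times> Tset \<mu> r" and r: "2 * r < \<mu>"
  shows "subgroup (css (gspan \<mu> C)) \<lparr>carrier = Q, monoid.mult = pmult, one = pone\<rparr>"
proof -
  let ?G = "\<lparr>carrier = Q, monoid.mult = pmult, one = pone\<rparr>"
  have grp: "group ?G" by (rule good_group[OF good])
  show ?thesis
  proof (rule group.subgroupI[OF grp])
    show "css (gspan \<mu> C) \<subseteq> carrier ?G" using sub by simp
    show "css (gspan \<mu> C) \<noteq> {}" unfolding css_def using zv_span by blast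
  next
    fix x assume x: "x \<in> css (gspan \<mu> C)"
    have xQ: "x \<in> carrier ?G" using x sub by auto
    have "pmult x x = (False, vadd (fst (snd x)) (fst (snd x)), vadd (snd (snd x)) (snd (snd x)))"
      using css_comm(2)[OF x x C C r] .
    then have "x \<otimes>\<^bsub>?G\<^esub> x = \<one>\<^bsub>?G\<^esub>" by (simp add: pone_eq)
    then have "inv\<^bsub>?G\<^esub> x = x" using group.inv_equality[OF grp _ xQ xQ] by simp
    then show "inv\<^bsub>?G\<^esub> x \<in> css (gspan \<mu> C)" using x by simp
  next
    fix x y assume x: "x \<in> css (gspan \<mu> C)" and y: "y \<in> css (gspan \<mu> C)"
    have e: "pmult x y = (False, vadd (fst (snd x)) (fst (snd y)), vadd (snd (snd x)) (snd (snd y)))"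
      using css_comm(2)[OF x y C C r] .
    have "fst (snd x) \<in> gspan \<mu> C" "snd (snd x) \<in> gspan \<mu> C"
         "fst (snd y) \<in> gspan \<mu> C" "snd (snd y) \<in> gspan \<mu> C"
      using x y unfolding css_def by auto
    then show "x \<otimes>\<^bsub>?G\<^esub> y \<in> css (gspan \<mu> C)"
      unfolding css_def using e gspan_add by simp
  qed
qed

lemma px_mult: "pmult (px u) (px v) = px (vadd u v)"
  unfolding px_def by (simp add: pmult_simp)
lemma pz_mult: "pmult (pz u) (pz v) = pz (vadd u v)"
  unfolding pz_def by (simp add: pmult_simp)
lemma pxz_mult: "pmult (px u) (pz v) = (False, u, v)"
  unfolding px_def pz_def by (simp add: pmult_simp)

lemma gen_css:
  assumes good: "goodset Q" and sub: "css (gspan \<mu> C) \<subseteq> Q"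
    and C: "C \<subseteq> UNIV \<times> Tset \<mu> r" and r: "2 * r < \<mu>"
    and Y1: "\<forall>i\<in>C. px (gen \<mu> i) \<in> Y \<and> pz (gen \<mu> i) \<in> Y"
    and Y2: "Y \<subseteq> css (gspan \<mu> C)"
  shows "generate \<lparr>carrier = Q, monoid.mult = pmult, one = pone\<rparr> Y = css (gspan \<mu> C)"
proof
  let ?G = "\<lparr>carrier = Q, monoid.mult = pmult, one = pone\<rparr>"
  have grp: "group ?G" by (rule good_group[OF good])
  show "generate ?G Y \<subseteq> css (gspan \<mu> C)"
    by (rule group.generate_subgroup_incl[OF grp Y2 css_subgroup[OF good sub C r]])
  have gx: "px (vsum (gen \<mu>) D) \<in> generate ?G Y" if "finite D" "D \<subseteq> C" for D
    using that
  proof (induction D rule: finite_induct)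
    case empty
    have "\<one>\<^bsub>?G\<^esub> \<in> generate ?G Y" by (rule generate.one)
    then show ?case by (simp add: px_def pone_eq)
  next
    case (insert i D)
    have "px (gen \<mu> i) \<in> generate ?G Y" by (rule generate.incl) (use insert Y1 in auto)
    then have "px (gen \<mu> i) \<otimes>\<^bsub>?G\<^esub> px (vsum (gen \<mu>) D) \<in> generate ?G Y"
      by (rule generate.eng) (use insert in auto)
    then show ?case using insert by (simp add: px_mult vsum_insert)
  qed
  have gz: "pz (vsum (gen \<mu>) D) \<in> generate ?G Y" if "finite D" "D \<subseteq> C" for D
    using that
  proof (induction D rule: finite_induct)
    case empty
    have "\<one>\<^bsub>?G\<^esub> \<in> generate ?G Y" by (rule generate.one)
    then show ?case by (simp add: pz_def pone_eq)
  next
    case (insert i D)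
    have "pz (gen \<mu> i) \<in> generate ?G Y" by (rule generate.incl) (use insert Y1 in auto)
    then have "pz (gen \<mu> i) \<otimes>\<^bsub>?G\<^esub> pz (vsum (gen \<mu>) D) \<in> generate ?G Y"
      by (rule generate.eng) (use insert in auto)
    then show ?case using insert by (simp add: pz_mult vsum_insert)
  qed
  show "css (gspan \<mu> C) \<subseteq> generate ?G Y"
  proof
    fix x assume "x \<in> css (gspan \<mu> C)"
    then obtain D D' where x: "x = (False, vsum (gen \<mu>) D, vsum (gen \<mu>) D')"
      "finite D" "D \<subseteq> C" "finite D'" "D' \<subseteq> C"
      unfolding css_def gspan_def by blast
    have "px (vsum (gen \<mu>) D) \<otimes>\<^bsub>?G\<^esub> pz (vsum (gen \<mu>) D') \<in> generate ?G Y"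
      by (rule generate.eng) (use gx gz x in auto)
    then show "x \<in> generate ?G Y" using x by (simp add: pxz_mult)
  qed
qed

lemma gspan_bound:
  assumes "u \<in> gspan \<mu> C" "C \<subseteq> {..s0} \<times> UNIV" "(s0 + 2) * 2^\<mu> \<le> j"
  shows "\<not> u j"
proof -
  obtain D where D: "u = vsum (gen \<mu>) D" "D \<subseteq> C" using assms(1) unfolding gspan_def by auto
  have "(s0 + 2) * 2^\<mu> div 2^\<mu> \<le> j div 2^\<mu>" using assms(3) by (rule div_le_mono)
  then have "j div 2^\<mu> \<ge> s0 + 2" by simp
  then have "{i\<in>D. gen \<mu> i j} = {}" using D(2) assms(2) unfolding gen_def by fastforce
  then show ?thesis unfolding D vsum_def by (metis card.empty even_zero)
qed

lemma css_QN:
  assumes "C \<subseteq> {..s0} \<times> UNIV" "(s0 + 2) * 2^\<mu> \<le> N"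
  shows "css (gspan \<mu> C) \<subseteq> QN N"
proof
  fix x assume "x \<in> css (gspan \<mu> C)"
  then obtain a b where x: "x = (False, a, b)" "a \<in> gspan \<mu> C" "b \<in> gspan \<mu> C" unfolding css_def by blast
  have "\<forall>j\<ge>N. \<not> a j \<and> \<not> b j" using gspan_bound[OF x(2) assms(1)] gspan_bound[OF x(3) assms(1)] assms(2) by auto
  then show "x \<in> QN N" unfolding QN_def x by simp
qed

lemma css_QI: "css (gspan \<mu> C) \<subseteq> QI"
proof
  fix x assume "x \<in> css (gspan \<mu> C)"
  then obtain a b where x: "x = (False, a, b)" "a \<in> gspan \<mu> C" "b \<in> gspan \<mu> C" unfolding css_def by blast
  have "fs a" "fs b" using x gspan_fs by auto
  then have "finite ({j. a j} \<union> {j. b j})" unfolding fs_def by simp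
  moreover have "{j. a j \<or> b j} = {j. a j} \<union> {j. b j}" by auto
  ultimately show "x \<in> QI" unfolding QI_def x by simp
qed

lemma shv_zv: "shv d zv = zv" unfolding shv_def by simp

lemma pshift_px: "pshift (t * 2^\<mu>) (px (gen \<mu> (0, T))) = px (gen \<mu> (t, T))"
proof -
  have "shv (t * 2^\<mu>) (gen \<mu> (0, T)) = gen \<mu> (t, T)"
    unfolding shv_def using gen_shift[of \<mu> 0 t T] by auto
  then show ?thesis unfolding px_def pshift_eq shv_zv by simp
qed

lemma pshift_pz: "pshift (t * 2^\<mu>) (pz (gen \<mu> (0, T))) = pz (gen \<mu> (t, T))"
proof -
  have "shv (t * 2^\<mu>) (gen \<mu> (0, T)) = gen \<mu> (t, T)"
    unfolding shv_def using gen_shift[of \<mu> 0 t T] by auto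
  then show ?thesis unfolding pz_def pshift_eq shv_zv by simp
qed

lemma pshift_css:
  assumes "M \<in> css (gspan \<mu> ({0} \<times> Tset \<mu> r))"
  shows "pshift (t * 2^\<mu>) M \<in> css (gspan \<mu> ({t} \<times> Tset \<mu> r))"
proof -
  obtain D D' where x: "M = (False, vsum (gen \<mu>) D, vsum (gen \<mu>) D')"
      "finite D" "D \<subseteq> {0} \<times> Tset \<mu> r" "finite D'" "D' \<subseteq> {0} \<times> Tset \<mu> r"
    using assms unfolding css_def gspan_def by blast
  let ?sh = "\<lambda>i::nat \<times> nat set. (fst i + t, snd i)"
  have "?sh ` D \<subseteq> {t} \<times> Tset \<mu> r" "?sh ` D' \<subseteq> {t} \<times> Tset \<mu> r" using x by auto
  then have "vsum (gen \<mu>) (?sh ` D) \<in> gspan \<mu> ({t} \<times> Tset \<mu> r)"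
            "vsum (gen \<mu>) (?sh ` D') \<in> gspan \<mu> ({t} \<times> Tset \<mu> r)"
    unfolding gspan_def using x by blast+
  then show ?thesis unfolding x pshift_eq vsum_shift css_def by blast
qed

definition S0c :: "nat \<Rightarrow> nat \<Rightarrow> pauli set" where
  "S0c \<mu> r = css (gspan \<mu> ({0} \<times> Tset \<mu> r))"

lemma St_eq:
  assumes r: "2 * r < \<mu>"
  shows "St (2^\<mu>) (2^\<mu>) (S0c \<mu> r) t = css (gspan \<mu> ({..t} \<times> Tset \<mu> r))"
proof (induction t)
  case 0
  have "{..0::nat} = {0}" by auto
  then show ?case unfolding S0c_def by simp
next
  case (Suc t)
  let ?n = "2^\<mu> :: nat"
  let ?C = "{..Suc t} \<times> Tset \<mu> r"
  let ?Y = "St ?n ?n (S0c \<mu> r) t \<union> pshift (Suc t * ?n) ` S0c \<mu> r"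
  have "St ?n ?n (S0c \<mu> r) (Suc t) = generate (Pt ?n ?n (Suc t)) ?Y" by simp
  also have "\<dots> = css (gspan \<mu> ?C)" unfolding Pt_eq
  proof (rule gen_css[OF good_QN _ _ r])
    show "css (gspan \<mu> ?C) \<subseteq> QN ((Suc t + 1) * ?n + ?n)"
      by (rule css_QN[of ?C "Suc t"]) auto
    show "?C \<subseteq> UNIV \<times> Tset \<mu> r" by auto
    show "\<forall>i\<in>?C. px (gen \<mu> i) \<in> ?Y \<and> pz (gen \<mu> i) \<in> ?Y"
    proof
      fix i assume i: "i \<in> ?C"
      obtain s T where iT: "i = (s, T)" by (cases i)
      show "px (gen \<mu> i) \<in> ?Y \<and> pz (gen \<mu> i) \<in> ?Y"
      proof (cases "s \<le> t")
        case True
        then have "gen \<mu> i \<in> gspan \<mu> ({..t} \<times> Tset \<mu> r)" using i iT by (intro gen_span) auto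
        then have "px (gen \<mu> i) \<in> css (gspan \<mu> ({..t} \<times> Tset \<mu> r))"
                  "pz (gen \<mu> i) \<in> css (gspan \<mu> ({..t} \<times> Tset \<mu> r))"
          unfolding css_def px_def pz_def using zv_span by blast+
        then show ?thesis using Suc.IH by auto
      next
        case False
        then have s: "s = Suc t" using i iT by auto
        have T: "T \<in> Tset \<mu> r" using i iT by auto
        have "gen \<mu> (0, T) \<in> gspan \<mu> ({0} \<times> Tset \<mu> r)" using T by (intro gen_span) auto
        then have "px (gen \<mu> (0, T)) \<in> S0c \<mu> r" "pz (gen \<mu> (0, T)) \<in> S0c \<mu> r"
          unfolding S0c_def css_def px_def pz_def using zv_span by blast+
        then have "pshift (Suc t * ?n) (px (gen \<mu> (0, T))) \<in> ?Y"
                  "pshift (Suc t * ?n) (pz (gen \<mu> (0, T))) \<in> ?Y" by auto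
        then show ?thesis unfolding iT s pshift_px pshift_pz by simp
      qed
    qed
    show "?Y \<subseteq> css (gspan \<mu> ?C)"
    proof
      fix y assume "y \<in> ?Y"
      then consider "y \<in> css (gspan \<mu> ({..t} \<times> Tset \<mu> r))" | M where "M \<in> S0c \<mu> r" "y = pshift (Suc t * ?n) M"
        using Suc.IH by auto
      then show "y \<in> css (gspan \<mu> ?C)"
      proof cases
        case 1
        have "gspan \<mu> ({..t} \<times> Tset \<mu> r) \<subseteq> gspan \<mu> ?C" by (rule gspan_mono) auto
        then show ?thesis using 1 unfolding css_def by blast
      next
        case 2
        have "y \<in> css (gspan \<mu> ({Suc t} \<times> Tset \<mu> r))" using 2 pshift_css unfolding S0c_def by blast
        moreover have "gspan \<mu> ({Suc t} \<times> Tset \<mu> r) \<subseteq> gspan \<mu> ?C" by (rule gspan_mono) auto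
        ultimately show ?thesis unfolding css_def by blast
      qed
    qed
  qed
  finally show ?case .
qed

lemma Sinf_eq:
  assumes r: "2 * r < \<mu>"
  shows "Sinf (2^\<mu>) (S0c \<mu> r) = css (gspan \<mu> (UNIV \<times> Tset \<mu> r))"
proof -
  let ?n = "2^\<mu> :: nat"
  let ?C = "(UNIV :: nat set) \<times> Tset \<mu> r"
  let ?Y = "{pshift (t * ?n) M | t M. M \<in> S0c \<mu> r}"
  have "Sinf ?n (S0c \<mu> r) = generate pauli_inf ?Y" unfolding Sinf_def by simp
  also have "\<dots> = css (gspan \<mu> ?C)" unfolding Pinf_eq
  proof (rule gen_css[OF good_QI css_QI _ r])
    show "?C \<subseteq> UNIV \<times> Tset \<mu> r" by simp
    show "\<forall>i\<in>?C. px (gen \<mu> i) \<in> ?Y \<and> pz (gen \<mu> i) \<in> ?Y"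
    proof
      fix i assume i: "i \<in> ?C"
      obtain s T where iT: "i = (s, T)" by (cases i)
      have T: "T \<in> Tset \<mu> r" using i iT by auto
      have "gen \<mu> (0, T) \<in> gspan \<mu> ({0} \<times> Tset \<mu> r)" using T by (intro gen_span) auto
      then have "px (gen \<mu> (0, T)) \<in> S0c \<mu> r" "pz (gen \<mu> (0, T)) \<in> S0c \<mu> r"
        unfolding S0c_def css_def px_def pz_def using zv_span by blast+
      then have "pshift (s * ?n) (px (gen \<mu> (0, T))) \<in> ?Y"
                "pshift (s * ?n) (pz (gen \<mu> (0, T))) \<in> ?Y" by blast+
      then show "px (gen \<mu> i) \<in> ?Y \<and> pz (gen \<mu> i) \<in> ?Y" unfolding iT pshift_px pshift_pz by simp
    qed
    show "?Y \<subseteq> css (gspan \<mu> ?C)"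
    proof
      fix y assume "y \<in> ?Y"
      then obtain t M where M: "M \<in> S0c \<mu> r" "y = pshift (t * ?n) M" by blast
      have "y \<in> css (gspan \<mu> ({t} \<times> Tset \<mu> r))" using M pshift_css unfolding S0c_def by blast
      moreover have "gspan \<mu> ({t} \<times> Tset \<mu> r) \<subseteq> gspan \<mu> ?C" by (rule gspan_mono) auto
      ultimately show "y \<in> css (gspan \<mu> ?C)" unfolding css_def by blast
    qed
  qed
  finally show ?thesis .
qed




definition pcos :: "(nat \<Rightarrow> bool) \<Rightarrow> (nat \<Rightarrow> bool) \<Rightarrow> pauli set" where
  "pcos a b = {x. fst (snd x) = a \<and> snd (snd x) = b}"

definition cssZ :: "(nat \<Rightarrow> bool) set \<Rightarrow> pauli set" where
  "cssZ U = {(s, a, b) | s a b. a \<in> U \<and> b \<in> U}"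

lemma Zc_pcos: "Zc = pcos zv zv"
proof (intro equalityI subsetI)
  fix x assume "x \<in> Zc" then show "x \<in> pcos zv zv" unfolding Zc_def pcos_def by auto
next
  fix x :: pauli assume x: "x \<in> pcos zv zv"
  obtain s a b where "x = (s, a, b)" by (cases x)
  then show "x \<in> Zc" using x unfolding Zc_def pcos_def by auto
qed

lemma cos_inj: "pcos a b = pcos a' b' \<Longrightarrow> a = a' \<and> b = b'"
proof -
  assume "pcos a b = pcos a' b'"
  moreover have "(False, a, b) \<in> pcos a b" unfolding pcos_def by simp
  ultimately have "(False, a, b) \<in> pcos a' b'" by simp
  then show ?thesis unfolding pcos_def by simp
qed

lemma cos_mult:
  assumes "monoid.mult H = pmult"
  shows "set_mult H (pcos a b) (pcos a' b') = pcos (vadd a a') (vadd b b')"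
proof (intro equalityI subsetI)
  fix x assume "x \<in> set_mult H (pcos a b) (pcos a' b')"
  then obtain y z where yz: "y \<in> pcos a b" "z \<in> pcos a' b'" "x = pmult y z"
    unfolding set_mult_def using assms by auto
  obtain s a0 b0 where y: "y = (s, a0, b0)" by (cases y)
  obtain s' a1 b1 where z: "z = (s', a1, b1)" by (cases z)
  have "x = pmult (s, a, b) (s', a', b')" using yz y z unfolding pcos_def by auto
  then show "x \<in> pcos (vadd a a') (vadd b b')" unfolding pcos_def by (simp add: pmult_simp)
next
  fix x :: pauli assume "x \<in> pcos (vadd a a') (vadd b b')"
  then obtain s where x: "x = (s, vadd a a', vadd b b')" unfolding pcos_def by (cases x) auto
  have "x = pmult (s \<noteq> ip b a', a, b) (False, a', b')" unfolding x by (auto simp: pmult_simp)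
  moreover have "(s \<noteq> ip b a', a, b) \<in> pcos a b" "(False, a', b') \<in> pcos a' b'" unfolding pcos_def by auto
  ultimately show "x \<in> set_mult H (pcos a b) (pcos a' b')"
    unfolding set_mult_def using assms by auto
qed

lemma rcos_Zc:
  assumes "monoid.mult H = pmult"
  shows "Zc #>\<^bsub>H\<^esub> (s, a, b) = pcos a b"
proof (intro equalityI subsetI)
  fix x assume "x \<in> Zc #>\<^bsub>H\<^esub> (s, a, b)"
  then obtain h where h: "h \<in> Zc" "x = pmult h (s, a, b)"
    unfolding r_coset_def using assms by auto
  then obtain s' where "h = (s', zv, zv)" unfolding Zc_def by auto
  then have "x = pmult (s', zv, zv) (s, a, b)" using h by simp
  then show "x \<in> pcos a b" unfolding pcos_def by (simp add: pmult_simp)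
next
  fix x :: pauli assume "x \<in> pcos a b"
  then obtain s' where x: "x = (s', a, b)" unfolding pcos_def by (cases x) auto
  have "x = pmult (s' \<noteq> s, zv, zv) (s, a, b)" unfolding x by (auto simp: pmult_simp)
  moreover have "(s' \<noteq> s, zv, zv) \<in> Zc" unfolding Zc_def by auto
  ultimately show "x \<in> Zc #>\<^bsub>H\<^esub> (s, a, b)" unfolding r_coset_def using assms by auto
qed

lemma carrier_quot:
  assumes "monoid.mult H = pmult" "carrier H = cssZ U"
  shows "carrier (H Mod Zc) = {pcos a b | a b. a \<in> U \<and> b \<in> U}"
proof -
  have "carrier (H Mod Zc) = (\<lambda>x. Zc #>\<^bsub>H\<^esub> x) ` carrier H" by (rule carrier_FactGroup)
  also have "\<dots> = {pcos a b | a b. a \<in> U \<and> b \<in> U}"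
  proof (intro equalityI subsetI)
    fix y assume "y \<in> (\<lambda>x. Zc #>\<^bsub>H\<^esub> x) ` carrier H"
    then obtain s a b where "y = Zc #>\<^bsub>H\<^esub> (s, a, b)" "a \<in> U" "b \<in> U"
      using assms(2) unfolding cssZ_def by auto
    then show "y \<in> {pcos a b | a b. a \<in> U \<and> b \<in> U}" using rcos_Zc[OF assms(1)] by auto
  next
    fix y assume "y \<in> {pcos a b | a b. a \<in> U \<and> b \<in> U}"
    then obtain a b where y: "y = pcos a b" "a \<in> U" "b \<in> U" by auto
    have "(False, a, b) \<in> carrier H" using assms(2) y unfolding cssZ_def by auto
    moreover have "y = Zc #>\<^bsub>H\<^esub> (False, a, b)" using rcos_Zc[OF assms(1)] y by simp
    ultimately show "y \<in> (\<lambda>x. Zc #>\<^bsub>H\<^esub> x) ` carrier H" by blast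
  qed
  finally show ?thesis .
qed

locale qsetup =
  fixes H :: "pauli monoid" and \<mu> r :: nat and C :: "(nat \<times> nat set) set"
  assumes Hm: "monoid.mult H = pmult"
    and Hc: "carrier H = cssZ (gspan \<mu> C)"
    and Cfin: "finite C" and Csub: "C \<subseteq> UNIV \<times> Tset \<mu> r" and rr: "2 * r < \<mu>"
begin

abbreviation "G \<equiv> H Mod Zc"
abbreviation "U \<equiv> gspan \<mu> C"

lemma carG: "carrier G = {pcos a b | a b. a \<in> U \<and> b \<in> U}"
  by (rule carrier_quot[OF Hm Hc])

lemma multG: "pcos a b \<otimes>\<^bsub>G\<^esub> pcos a' b' = pcos (vadd a a') (vadd b b')"
  using cos_mult[OF Hm] by simp

lemma oneG: "\<one>\<^bsub>G\<^esub> = pcos zv zv"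
  using Zc_pcos by simp

lemma multG'[simp]: "pcos a b <#>\<^bsub>H\<^esub> pcos a' b' = pcos (vadd a a') (vadd b b')"
  using cos_mult[OF Hm] by simp

lemma cosG: "x \<in> carrier G \<Longrightarrow> \<exists>a b. x = pcos a b \<and> a \<in> U \<and> b \<in> U"
  using carG by auto

lemma cosG': "a \<in> U \<Longrightarrow> b \<in> U \<Longrightarrow> pcos a b \<in> carrier G"
  using carG by auto

lemma commG: "comm_group G"
proof (rule comm_groupI)
  fix x y assume "x \<in> carrier G" "y \<in> carrier G"
  then obtain a b a' b' where "x = pcos a b" "a \<in> U" "b \<in> U" "y = pcos a' b'" "a' \<in> U" "b' \<in> U"
    using cosG by metis
  then show "x \<otimes>\<^bsub>G\<^esub> y \<in> carrier G" using multG cosG' gspan_add by simp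
  show "x \<otimes>\<^bsub>G\<^esub> y = y \<otimes>\<^bsub>G\<^esub> x" using multG vadd_comm \<open>x = pcos a b\<close> \<open>y = pcos a' b'\<close> by metis
next
  have "pcos zv zv \<in> carrier G" by (rule cosG') (rule zv_span)+
  then show "\<one>\<^bsub>G\<^esub> \<in> carrier G" using Zc_pcos by simp
next
  fix x y z assume "x \<in> carrier G" "y \<in> carrier G" "z \<in> carrier G"
  then obtain a b a' b' a'' b'' where "x = pcos a b" "y = pcos a' b'" "z = pcos a'' b''"
    using cosG by metis
  then show "x \<otimes>\<^bsub>G\<^esub> y \<otimes>\<^bsub>G\<^esub> z = x \<otimes>\<^bsub>G\<^esub> (y \<otimes>\<^bsub>G\<^esub> z)" using multG vadd_assoc by simp
next
  fix x assume "x \<in> carrier G"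
  then obtain a b where "x = pcos a b" using cosG by metis
  then show "\<one>\<^bsub>G\<^esub> \<otimes>\<^bsub>G\<^esub> x = x" by (simp add: Zc_pcos)
next
  fix x assume x: "x \<in> carrier G"
  then obtain a b where "x = pcos a b" using cosG by metis
  then have "x \<otimes>\<^bsub>G\<^esub> x = \<one>\<^bsub>G\<^esub>" by (simp add: Zc_pcos)
  then show "\<exists>y\<in>carrier G. y \<otimes>\<^bsub>G\<^esub> x = \<one>\<^bsub>G\<^esub>" using x by blast
qed

lemma grpG: "group G" using commG comm_group.axioms(2) by blast
lemma cmG: "comm_monoid G" using commG comm_group.axioms(1) by blast

definition phi :: "bool \<times> (nat \<times> nat set) \<Rightarrow> pauli set" where
  "phi x = (if fst x then pcos zv (gen \<mu> (snd x)) else pcos (gen \<mu> (snd x)) zv)"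

lemma gen_nz: "i \<in> C \<Longrightarrow> gen \<mu> i \<noteq> zv"
proof
  assume i: "i \<in> C" "gen \<mu> i = zv"
  have v: "vsum (gen \<mu>) {i} = zv" using i by (simp add: vsum_insert)
  have "{i} = {}" by (rule gen_indep[of "{i}" \<mu> r]) (use i Csub v in auto)
  then show False by simp
qed

lemma gen_inj: "i \<in> C \<Longrightarrow> i' \<in> C \<Longrightarrow> gen \<mu> i = gen \<mu> i' \<Longrightarrow> i = i'"
proof (rule ccontr)
  assume i: "i \<in> C" "i' \<in> C" "gen \<mu> i = gen \<mu> i'" "i \<noteq> i'"
  have "vsum (gen \<mu>) {i, i'} = vadd (gen \<mu> i) (gen \<mu> i')" using i by (simp add: vsum_insert)
  then have v: "vsum (gen \<mu>) {i, i'} = zv" using i by simp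
  have "{i, i'} = {}" by (rule gen_indep[of "{i, i'}" \<mu> r]) (use i Csub v in auto)
  then show False by simp
qed

lemma phi_inj: "inj_on phi (UNIV \<times> C)"
proof (rule inj_onI)
  fix x y assume xy: "x \<in> UNIV \<times> C" "y \<in> UNIV \<times> C" "phi x = phi y"
  obtain b i where x: "x = (b, i)" by (cases x)
  obtain b' i' where y: "y = (b', i')" by (cases y)
  have i: "i \<in> C" "i' \<in> C" using xy x y by auto
  show "x = y"
  proof (cases b; cases b')
    assume "b" "b'"
    then have "gen \<mu> i = gen \<mu> i'" using xy(3) cos_inj unfolding x y phi_def by auto
    then show ?thesis using gen_inj i x y \<open>b\<close> \<open>b'\<close> by simp
  next
    assume "b" "\<not> b'"
    then have "gen \<mu> i = zv" using xy(3) cos_inj unfolding x y phi_def by auto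
    then show ?thesis using gen_nz i by simp
  next
    assume "\<not> b" "b'"
    then have "gen \<mu> i = zv" using xy(3) cos_inj unfolding x y phi_def by auto
    then show ?thesis using gen_nz i by simp
  next
    assume "\<not> b" "\<not> b'"
    then have "gen \<mu> i = gen \<mu> i'" using xy(3) cos_inj unfolding x y phi_def by auto
    then show ?thesis using gen_inj i x y \<open>\<not> b\<close> \<open>\<not> b'\<close> by simp
  qed
qed

lemma phi_car: "x \<in> UNIV \<times> C \<Longrightarrow> phi x \<in> carrier G"
  unfolding phi_def using cosG' gen_span zv_span by (auto simp: mem_Times_iff)

lemma finprod_phi:
  assumes "finite E" "E \<subseteq> UNIV \<times> C"
  shows "finprod G phi E = pcos (vsum (gen \<mu>) {i. (False, i) \<in> E}) (vsum (gen \<mu>) {i. (True, i) \<in> E})"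
  using assms
proof (induction E rule: finite_induct)
  case empty
  then show ?case using comm_monoid.finprod_empty[OF cmG] oneG by simp
next
  case (insert x E)
  obtain b i where x: "x = (b, i)" by (cases x)
  have fF: "finite {i. (False, i) \<in> E}" "finite {i. (True, i) \<in> E}"
  proof -
    have "{i. (False, i) \<in> E} \<subseteq> snd ` E" "{i. (True, i) \<in> E} \<subseteq> snd ` E" by force+
    then show "finite {i. (False, i) \<in> E}" "finite {i. (True, i) \<in> E}"
      using insert(1) finite_subset by blast+
  qed
  have "finprod G phi (insert x E) = phi x \<otimes>\<^bsub>G\<^esub> finprod G phi E"
    by (rule comm_monoid.finprod_insert[OF cmG insert(1,2)]) (use insert(4) phi_car in auto)
  also have "\<dots> = phi x \<otimes>\<^bsub>G\<^esub> pcos (vsum (gen \<mu>) {i. (False, i) \<in> E}) (vsum (gen \<mu>) {i. (True, i) \<in> E})"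
    using insert by simp
  also have "\<dots> = pcos (vsum (gen \<mu>) {i. (False, i) \<in> insert x E}) (vsum (gen \<mu>) {i. (True, i) \<in> insert x E})"
  proof (cases b)
    case True
    have "{i'. (True, i') \<in> insert x E} = insert i {i'. (True, i') \<in> E}" using x True by auto
    moreover have "i \<notin> {i'. (True, i') \<in> E}" using insert(2) x True by auto
    moreover have "{i'. (False, i') \<in> insert x E} = {i'. (False, i') \<in> E}" using x True by auto
    ultimately show ?thesis using fF x True unfolding phi_def by (simp add: multG vsum_insert)
  next
    case False
    have "{i'. (False, i') \<in> insert x E} = insert i {i'. (False, i') \<in> E}" using x False by auto
    moreover have "i \<notin> {i'. (False, i') \<in> E}" using insert(2) x False by auto
    moreover have "{i'. (True, i') \<in> insert x E} = {i'. (True, i') \<in> E}" using x False by auto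
    ultimately show ?thesis using fF x False unfolding phi_def by (simp add: multG vsum_insert)
  qed
  finally show ?case .
qed

lemma dimG: "f2_dim_eq G (2 * card C)"
  unfolding f2_dim_eq_def
proof (intro exI conjI)
  let ?B = "phi ` (UNIV \<times> C)"
  show "?B \<subseteq> carrier G" using phi_car by auto
  show "finite ?B" using Cfin by simp
  show "card ?B = 2 * card C"
    using card_image[OF phi_inj] Cfin by (simp add: card_cartesian_product)
  show "generate G ?B = carrier G"
  proof
    show "generate G ?B \<subseteq> carrier G" by (rule group.generate_incl[OF grpG]) (use phi_car in auto)
    have g1: "pcos (vsum (gen \<mu>) D) zv \<in> generate G ?B" if "finite D" "D \<subseteq> C" for D
      using that
    proof (induction D rule: finite_induct)
      case empty
      show ?case using generate.one[of G ?B] oneG by simp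
    next
      case (insert i D)
      have "pcos (gen \<mu> i) zv = phi (False, i)" unfolding phi_def by simp
      then have "pcos (gen \<mu> i) zv \<in> generate G ?B" using insert(4) by (intro generate.incl) auto
      then have "pcos (gen \<mu> i) zv \<otimes>\<^bsub>G\<^esub> pcos (vsum (gen \<mu>) D) zv \<in> generate G ?B"
        by (rule generate.eng) (use insert in auto)
      then show ?case using insert by (simp add: multG vsum_insert)
    qed
    have g2: "pcos zv (vsum (gen \<mu>) D) \<in> generate G ?B" if "finite D" "D \<subseteq> C" for D
      using that
    proof (induction D rule: finite_induct)
      case empty
      show ?case using generate.one[of G ?B] oneG by simp
    next
      case (insert i D)
      have "pcos zv (gen \<mu> i) = phi (True, i)" unfolding phi_def by simp
      then have "pcos zv (gen \<mu> i) \<in> generate G ?B" using insert(4) by (intro generate.incl) auto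
      then have "pcos zv (gen \<mu> i) \<otimes>\<^bsub>G\<^esub> pcos zv (vsum (gen \<mu>) D) \<in> generate G ?B"
        by (rule generate.eng) (use insert in auto)
      then show ?case using insert by (simp add: multG vsum_insert)
    qed
    show "carrier G \<subseteq> generate G ?B"
    proof
      fix x assume "x \<in> carrier G"
      then obtain a b where x: "x = pcos a b" "a \<in> U" "b \<in> U" using cosG by metis
      obtain D D' where D: "a = vsum (gen \<mu>) D" "finite D" "D \<subseteq> C" "b = vsum (gen \<mu>) D'" "finite D'" "D' \<subseteq> C"
        using x unfolding gspan_def by blast
      have "pcos a zv \<otimes>\<^bsub>G\<^esub> pcos zv b \<in> generate G ?B"
        by (rule generate.eng) (use g1 g2 D in auto)
      then show "x \<in> generate G ?B" using x by (simp add: multG)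
    qed
  qed
  show "\<forall>C'\<subseteq>?B. finprod G (\<lambda>x. x) C' = \<one>\<^bsub>G\<^esub> \<longrightarrow> C' = {}"
  proof (intro allI impI)
    fix C' assume C': "C' \<subseteq> ?B" "finprod G (\<lambda>x. x) C' = \<one>\<^bsub>G\<^esub>"
    define E where "E = {x \<in> UNIV \<times> C. phi x \<in> C'}"
    have CE: "C' = phi ` E" unfolding E_def using C'(1) by auto
    have Esub: "E \<subseteq> UNIV \<times> C" unfolding E_def by auto
    have "finite ((UNIV :: bool set) \<times> C)" using Cfin by simp
    then have Efin: "finite E" using Esub finite_subset by blast
    have injE: "inj_on phi E" using phi_inj Esub inj_on_subset by blast
    have "finprod G (\<lambda>x. x) C' = finprod G (\<lambda>x. phi x) E"
      unfolding CE by (rule comm_monoid.finprod_reindex[OF cmG _ injE]) (use Esub phi_car in auto)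
    also have "\<dots> = pcos (vsum (gen \<mu>) {i. (False, i) \<in> E}) (vsum (gen \<mu>) {i. (True, i) \<in> E})"
      using finprod_phi[OF Efin Esub] by simp
    finally have "pcos (vsum (gen \<mu>) {i. (False, i) \<in> E}) (vsum (gen \<mu>) {i. (True, i) \<in> E}) = pcos zv zv"
      using C'(2) oneG by simp
    then have z: "vsum (gen \<mu>) {i. (False, i) \<in> E} = zv" "vsum (gen \<mu>) {i. (True, i) \<in> E} = zv"
      using cos_inj by blast+
    have sF: "{i. (False, i) \<in> E} \<subseteq> C" "{i. (True, i) \<in> E} \<subseteq> C" using Esub by auto
    then have fF: "finite {i. (False, i) \<in> E}" "finite {i. (True, i) \<in> E}" using Cfin finite_subset by blast+
    have "{i. (False, i) \<in> E} = {}" by (rule gen_indep[OF fF(1) _ z(1)]) (use sF Csub in auto)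
    moreover have "{i. (True, i) \<in> E} = {}" by (rule gen_indep[OF fF(2) _ z(2)]) (use sF Csub in auto)
    ultimately have "E = {}"
    proof -
      assume e1: "{i. (False, i) \<in> E} = {}" and e2: "{i. (True, i) \<in> E} = {}"
      have "x \<notin> E" for x
      proof
        assume "x \<in> E"
        obtain b i where x: "x = (b, i)" by (cases x)
        show False
        proof (cases b)
          case True
          then have "i \<in> {i. (True, i) \<in> E}" using \<open>x \<in> E\<close> x by simp
          then show False using e2 by (simp only: empty_iff)
        next
          case False
          then have "i \<in> {i. (False, i) \<in> E}" using \<open>x \<in> E\<close> x by simp
          then show False using e1 by (simp only: empty_iff)
        qed
      qed
      then show "E = {}" by blast
    qed
    then show "C' = {}" using CE by simp
  qed
qed

end




lemma Tset_fin: "finite (Tset \<mu> r)"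
proof -
  have "Tset \<mu> r \<subseteq> Pow {..<\<mu>}" unfolding Tset_def by auto
  then show ?thesis using finite_subset by blast
qed

lemma card_Tset: "card (Tset \<mu> r) = (\<Sum>i = 0..r. \<mu> choose i)"
proof -
  have e: "Tset \<mu> r = (\<Union>i\<in>{0..r}. {T. T \<subseteq> {..<\<mu>} \<and> card T = i})" unfolding Tset_def by auto
  have "card (\<Union>i\<in>{0..r}. {T. T \<subseteq> {..<\<mu>} \<and> card T = i}) = (\<Sum>i = 0..r. card {T. T \<subseteq> {..<\<mu>} \<and> card T = i})"
  proof (rule card_UN_disjoint)
    show "finite {0..r}" by simp
    show "\<forall>i\<in>{0..r}. finite {T. T \<subseteq> {..<\<mu>} \<and> card T = i}"
    proof
      fix i
      have "{T. T \<subseteq> {..<\<mu>} \<and> card T = i} \<subseteq> Pow {..<\<mu>}" by auto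
      then show "finite {T. T \<subseteq> {..<\<mu>} \<and> card T = i}" using finite_subset by blast
    qed
    show "\<forall>i\<in>{0..r}. \<forall>j\<in>{0..r}. i \<noteq> j \<longrightarrow> {T. T \<subseteq> {..<\<mu>} \<and> card T = i} \<inter> {T. T \<subseteq> {..<\<mu>} \<and> card T = j} = {}"
      by auto
  qed
  also have "\<dots> = (\<Sum>i = 0..r. \<mu> choose i)" using n_subsets[of "{..<\<mu>}"] by simp
  finally show ?thesis using e by simp
qed

lemma card_Tset_le:
  assumes "2 * r < \<mu>"
  shows "2 * card (Tset \<mu> r) \<le> 2^\<mu>"
proof -
  let ?c = "\<lambda>T. {..<\<mu>} - T"
  have inj: "inj_on ?c (Tset \<mu> r)"
  proof (rule inj_onI)
    fix T T' assume T: "T \<in> Tset \<mu> r" "T' \<in> Tset \<mu> r" "?c T = ?c T'"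
    have "T = {..<\<mu>} - ?c T" using T(1) unfolding Tset_def by blast
    also have "\<dots> = {..<\<mu>} - ?c T'" using T(3) by simp
    also have "\<dots> = T'" using T(2) unfolding Tset_def by blast
    finally show "T = T'" .
  qed
  have disj: "Tset \<mu> r \<inter> ?c ` Tset \<mu> r = {}"
  proof (rule ccontr)
    assume "Tset \<mu> r \<inter> ?c ` Tset \<mu> r \<noteq> {}"
    then obtain T where T: "T \<in> Tset \<mu> r" "?c T \<in> Tset \<mu> r" by auto
    have Ts: "T \<subseteq> {..<\<mu>}" using T(1) unfolding Tset_def by simp
    then have "finite T" using finite_subset by blast
    then have "card (?c T) = \<mu> - card T" using Ts by (simp add: card_Diff_subset)
    moreover have "card (?c T) \<le> r" "card T \<le> r" using T unfolding Tset_def by auto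
    ultimately show False using assms by linarith
  qed
  have fin: "finite (Tset \<mu> r)" by (rule Tset_fin)
  have "card (Tset \<mu> r \<union> ?c ` Tset \<mu> r) = card (Tset \<mu> r) + card (?c ` Tset \<mu> r)"
    by (rule card_Un_disjoint) (use fin disj in auto)
  also have "card (?c ` Tset \<mu> r) = card (Tset \<mu> r)" using card_image[OF inj] .
  finally have c: "card (Tset \<mu> r \<union> ?c ` Tset \<mu> r) = 2 * card (Tset \<mu> r)" by simp
  have "Tset \<mu> r \<union> ?c ` Tset \<mu> r \<subseteq> Pow {..<\<mu>}" unfolding Tset_def by blast
  then have "card (Tset \<mu> r \<union> ?c ` Tset \<mu> r) \<le> card (Pow {..<\<mu>::nat})" by (rule card_mono[rotated]) simp
  then show ?thesis using c by (simp add: card_Pow)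
qed

lemma setmult_Pt: "set_mult (Pt n m' t) (css U) Zc = cssZ U"
proof (intro equalityI subsetI)
  fix x assume "x \<in> set_mult (Pt n m' t) (css U) Zc"
  then obtain h z where hz: "h \<in> css U" "z \<in> Zc" "x = pmult h z"
    unfolding set_mult_def Pt_eq by auto
  obtain a b where h: "h = (False, a, b)" "a \<in> U" "b \<in> U" using hz(1) unfolding css_def by auto
  obtain s where z: "z = (s, zv, zv)" using hz(2) unfolding Zc_def by auto
  have "x = (s, a, b)" using hz h z by (simp add: pmult_simp)
  then show "x \<in> cssZ U" unfolding cssZ_def using h by auto
next
  fix x assume "x \<in> cssZ U"
  then obtain s a b where x: "x = (s, a, b)" "a \<in> U" "b \<in> U" unfolding cssZ_def by auto
  have "x = pmult (False, a, b) (s, zv, zv)" using x by (simp add: pmult_simp)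
  moreover have "(False, a, b) \<in> css U" "(s, zv, zv) \<in> Zc" unfolding css_def Zc_def using x by auto
  ultimately show "x \<in> set_mult (Pt n m' t) (css U) Zc" unfolding set_mult_def Pt_eq by auto
qed

lemma setmult_Pinf: "set_mult pauli_inf Zc (css U) = cssZ U"
proof (intro equalityI subsetI)
  fix x assume "x \<in> set_mult pauli_inf Zc (css U)"
  then obtain h z where hz: "z \<in> css U" "h \<in> Zc" "x = pmult h z"
    unfolding set_mult_def Pinf_eq by auto
  obtain a b where z: "z = (False, a, b)" "a \<in> U" "b \<in> U" using hz(1) unfolding css_def by auto
  obtain s where h: "h = (s, zv, zv)" using hz(2) unfolding Zc_def by auto
  have "x = (s, a, b)" using hz h z by (simp add: pmult_simp)
  then show "x \<in> cssZ U" unfolding cssZ_def using z by auto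
next
  fix x assume "x \<in> cssZ U"
  then obtain s a b where x: "x = (s, a, b)" "a \<in> U" "b \<in> U" unfolding cssZ_def by auto
  have "x = pmult (s, zv, zv) (False, a, b)" using x by (simp add: pmult_simp)
  moreover have "(False, a, b) \<in> css U" "(s, zv, zv) \<in> Zc" unfolding css_def Zc_def using x by auto
  ultimately show "x \<in> set_mult pauli_inf Zc (css U)" unfolding set_mult_def Pinf_eq by auto
qed

lemma weight_lb:
  assumes fa: "fs a" and fb: "fs b" and nz: "a \<noteq> zv \<or> b \<noteq> zv"
    and oa: "\<forall>t. \<forall>T\<in>Tset \<mu> r. \<not> ip a (gen \<mu> (t, T))"
    and ob: "\<forall>t. \<forall>T\<in>Tset \<mu> r. \<not> ip b (gen \<mu> (t, T))"
  shows "2^(Suc r) \<le> pweight (s, a, b)"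
proof -
  have fin: "finite {j. a j \<or> b j}"
  proof -
    have "{j. a j \<or> b j} = {j. a j} \<union> {j. b j}" by auto
    then show ?thesis using fa fb unfolding fs_def by simp
  qed
  have "\<exists>z j0. fs z \<and> z j0 \<and> (\<forall>t. \<forall>T\<in>Tset \<mu> r. \<not> ip z (gen \<mu> (t, T))) \<and> {j. z j} \<subseteq> {j. a j \<or> b j}"
  proof (cases "a = zv")
    case False
    then obtain j0 where "a j0" by auto
    then show ?thesis using fa oa by (intro exI[of _ a] exI[of _ j0]) auto
  next
    case True
    then have "b \<noteq> zv" using nz by simp
    then obtain j0 where "b j0" by auto
    then show ?thesis using fb ob by (intro exI[of _ b] exI[of _ j0]) auto
  qed
  then obtain z j0 where z: "fs z" "z j0" "\<forall>t. \<forall>T\<in>Tset \<mu> r. \<not> ip z (gen \<mu> (t, T))" "{j. z j} \<subseteq> {j. a j \<or> b j}"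
    by blast
  have "2^(Suc r) \<le> card {j. z j}" by (rule lower_bound[OF z(1) z(2) z(3)])
  also have "\<dots> \<le> card {j. a j \<or> b j}" by (rule card_mono[OF fin z(4)])
  finally show ?thesis unfolding pweight_def by simp
qed




lemma main_gen:
  fixes \<mu> r l :: nat
  assumes r: "2 * r < \<mu>" and l: "1 \<le> l"
  shows "\<exists>m' S0.
     m' \<le> 2 ^ \<mu> * (2 ^ l - 1) \<and>
     conv_stab_code (2 ^ \<mu>) (2 ^ \<mu> - 2 * (\<Sum>i = 0..r. \<mu> choose i)) m' S0 \<and>
     free_distance (2 ^ \<mu>) S0 = 2 ^ (r + 1) \<and>
     pure_code (2 ^ \<mu>) S0"
proof (intro exI conjI)
  let ?n = "2^\<mu> :: nat"
  let ?K = "\<Sum>i = 0..r. \<mu> choose i"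
  let ?S0 = "S0c \<mu> r"
  let ?UI = "gspan \<mu> ((UNIV :: nat set) \<times> Tset \<mu> r)"
  have K: "?K = card (Tset \<mu> r)" using card_Tset by simp
  have K2: "2 * ?K \<le> ?n" using card_Tset_le[OF r] K by simp
  have "(2::nat) ^ l \<ge> 2 ^ 1" using l by (intro power_increasing) auto
  then show "?n \<le> ?n * (2 ^ l - 1)" by simp
  show "conv_stab_code ?n (?n - 2 * ?K) ?n ?S0"
    unfolding conv_stab_code_def
  proof (intro conjI allI impI ballI)
    show "0 < ?n" by simp
    show "0 < ?n" by simp
    show "?n - 2 * ?K \<le> ?n" by simp
    show "subgroup ?S0 (Pt ?n ?n 0)"
      unfolding Pt_eq S0c_def
      by (rule css_subgroup[OF good_QN _ _ r]) (rule css_QN[of _ 0], auto)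
    fix x y assume "x \<in> ?S0" "y \<in> ?S0"
    then show "pmult x y = pmult y x" unfolding S0c_def
      by (rule css_comm(1)[of _ \<mu> _ _ _ r]) (use r in auto)
  next
    fix t :: nat and M N assume t: "1 \<le> t" and M: "M \<in> ?S0" and N: "N \<in> ?S0"
    have "pshift (t * ?n) M \<in> css (gspan \<mu> ({t} \<times> Tset \<mu> r))"
      using pshift_css M unfolding S0c_def by blast
    then show "pmult (pshift (t * ?n) M) N = pmult N (pshift (t * ?n) M)"
      using N unfolding S0c_def by (rule css_comm(1)[of _ \<mu> _ _ _ r]) (use r in auto)
  next
    fix t :: nat
    let ?C = "{..t} \<times> Tset \<mu> r"
    let ?H = "(Pt ?n ?n t)\<lparr>carrier := set_mult (Pt ?n ?n t) (St ?n ?n ?S0 t) (gcenter (Pt ?n ?n t))\<rparr>"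
    have cH: "carrier ?H = cssZ (gspan \<mu> ?C)" using St_eq[OF r] center_Pt setmult_Pt by simp
    have mH: "monoid.mult ?H = pmult" by (simp add: Pt_eq)
    have Cfin: "finite ?C" using Tset_fin by simp
    interpret Q: qsetup ?H \<mu> r ?C
      by (unfold_locales) (use cH mH Cfin r in auto)
    have "f2_dim_eq (?H Mod Zc) (2 * card ?C)" by (rule Q.dimG)
    moreover have "2 * card ?C = (t + 1) * (?n - (?n - 2 * ?K))"
      using K K2 by (simp add: card_cartesian_product)
    ultimately show "f2_dim_eq (?H Mod gcenter (Pt ?n ?n t)) ((t + 1) * (?n - (?n - 2 * ?K)))"
      using center_Pt by simp
  next
    fix t :: nat
    have "St ?n ?n ?S0 t \<inter> gcenter (Pt ?n ?n t) = css (gspan \<mu> ({..t} \<times> Tset \<mu> r)) \<inter> Zc"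
      using St_eq[OF r] center_Pt by simp
    also have "\<dots> = {pone}"
    proof (intro equalityI subsetI)
      fix x assume "x \<in> css (gspan \<mu> ({..t} \<times> Tset \<mu> r)) \<inter> Zc"
      then show "x \<in> {pone}" unfolding css_def Zc_def pone_eq by auto
    next
      fix x assume "x \<in> {pone}"
      then show "x \<in> css (gspan \<mu> ({..t} \<times> Tset \<mu> r)) \<inter> Zc"
        unfolding css_def Zc_def pone_eq using zv_span by auto
    qed
    finally show "St ?n ?n ?S0 t \<inter> gcenter (Pt ?n ?n t) = {pone}" .
  qed
  have SI: "Sinf ?n ?S0 = css ?UI" by (rule Sinf_eq[OF r])
  have ZS: "set_mult pauli_inf (gcenter pauli_inf) (Sinf ?n ?S0) = cssZ ?UI"
    using SI center_Pinf setmult_Pinf by simp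
  have gensI: "px (gen \<mu> (t, T)) \<in> css ?UI \<and> pz (gen \<mu> (t, T)) \<in> css ?UI" if "T \<in> Tset \<mu> r" for t T
  proof -
    have "gen \<mu> (t, T) \<in> ?UI" using that by (intro gen_span) auto
    then show ?thesis unfolding css_def px_def pz_def using zv_span by blast
  qed
  have lb: "2^(Suc r) \<le> pweight x"
    if x: "x \<in> gcentralizer pauli_inf (Sinf ?n ?S0) - set_mult pauli_inf (gcenter pauli_inf) (Sinf ?n ?S0)" for x
  proof -
    obtain s a b where xe: "x = (s, a, b)" by (cases x)
    have xQ: "x \<in> QI" and cm: "\<forall>y\<in>css ?UI. pmult x y = pmult y x"
      using x SI unfolding gcentralizer_def Pinf_eq by auto
    have fab: "fs a" "fs b" using xQ good_QI unfolding goodset_def xe by blast+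
    have nz: "a \<noteq> zv \<or> b \<noteq> zv"
    proof (rule ccontr)
      assume "\<not> (a \<noteq> zv \<or> b \<noteq> zv)"
      then have "x \<in> cssZ ?UI" unfolding cssZ_def xe using zv_span by auto
      then show False using x ZS by simp
    qed
    have ob: "\<forall>t. \<forall>T\<in>Tset \<mu> r. \<not> ip b (gen \<mu> (t, T))"
    proof (intro allI ballI)
      fix t T assume "T \<in> Tset \<mu> r"
      then have "pmult x (px (gen \<mu> (t, T))) = pmult (px (gen \<mu> (t, T))) x" using cm gensI by blast
      then show "\<not> ip b (gen \<mu> (t, T))" unfolding xe px_def by (cases s) (simp_all add: pmult_simp)
    qed
    have oa: "\<forall>t. \<forall>T\<in>Tset \<mu> r. \<not> ip a (gen \<mu> (t, T))"
    proof (intro allI ballI)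
      fix t T assume "T \<in> Tset \<mu> r"
      then have "pmult x (pz (gen \<mu> (t, T))) = pmult (pz (gen \<mu> (t, T))) x" using cm gensI by blast
      then have "\<not> ip (gen \<mu> (t, T)) a" unfolding xe pz_def by (cases s) (simp_all add: pmult_simp)
      then show "\<not> ip a (gen \<mu> (t, T))" using ip_sym[of a "gen \<mu> (t, T)"] by simp
    qed
    show ?thesis unfolding xe by (rule weight_lb[OF fab nz oa ob])
  qed
  let ?e = "(False, wv \<mu> r, zv) :: pauli"
  have eC: "?e \<in> gcentralizer pauli_inf (Sinf ?n ?S0)"
    unfolding gcentralizer_def SI Pinf_eq
  proof (intro CollectI conjI ballI)
    have "{j. wv \<mu> r j \<or> False} = {j. wv \<mu> r j}" by simp
    then show "?e \<in> carrier \<lparr>carrier = QI, monoid.mult = pmult, one = pone\<rparr>"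
      using fs_wv unfolding QI_def fs_def by simp
    fix y assume "y \<in> css ?UI"
    then obtain a' b' where y: "y = (False, a', b')" "b' \<in> ?UI" unfolding css_def by auto
    have "\<not> ip b' (wv \<mu> r)"
    proof -
      obtain D where D: "b' = vsum (gen \<mu>) D" "D \<subseteq> UNIV \<times> Tset \<mu> r" "finite D"
        using y(2) unfolding gspan_def by auto
      have "\<forall>i\<in>D. \<not> ip (gen \<mu> i) (wv \<mu> r)"
      proof
        fix i assume "i \<in> D"
        obtain t T where i: "i = (t, T)" by (cases i)
        have "T \<in> Tset \<mu> r" using \<open>i \<in> D\<close> D(2) i by auto
        then have "\<not> ip (wv \<mu> r) (gen \<mu> i)" using ip_wv_gen[OF _ r] i by simp
        then show "\<not> ip (gen \<mu> i) (wv \<mu> r)" using ip_sym[of "wv \<mu> r" "gen \<mu> i"] by simp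
      qed
      then show ?thesis unfolding D(1) by (intro ip_vsum_zero) (use D fs_gen in auto)
    qed
    then show "?e \<otimes>\<^bsub>\<lparr>carrier = QI, monoid.mult = pmult, one = pone\<rparr>\<^esub> y = y \<otimes>\<^bsub>\<lparr>carrier = QI, monoid.mult = pmult, one = pone\<rparr>\<^esub> ?e"
      unfolding y by (simp add: pmult_simp vadd_comm)
  qed
  have eZ: "?e \<notin> set_mult pauli_inf (gcenter pauli_inf) (Sinf ?n ?S0)"
  proof
    assume "?e \<in> set_mult pauli_inf (gcenter pauli_inf) (Sinf ?n ?S0)"
    then have "wv \<mu> r \<in> ?UI" using ZS unfolding cssZ_def by auto
    then obtain D where D: "wv \<mu> r = vsum (gen \<mu>) D" "finite D" unfolding gspan_def by auto
    have "\<not> ip (vsum (gen \<mu>) D) (col \<mu> (ptop \<mu>))"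
      by (intro ip_vsum_zero) (use D fs_gen ip_gen_col in auto)
    then show False using ip_wv_col[of \<mu> r] D(1) by simp
  qed
  have ew: "pweight ?e = 2^(Suc r)"
  proof -
    have "{j. wv \<mu> r j \<or> False} = {j. wv \<mu> r j}" by simp
    then show ?thesis unfolding pweight_def using card_wv[of r \<mu>] r by simp
  qed
  have fd: "free_distance ?n ?S0 = 2^(Suc r)"
    unfolding free_distance_def
  proof (rule cInf_eq_minimum)
    show "2^(Suc r) \<in> pweight ` (gcentralizer pauli_inf (Sinf ?n ?S0) - set_mult pauli_inf (gcenter pauli_inf) (Sinf ?n ?S0))"
      using eC eZ ew by (metis DiffI imageI)
    fix w assume "w \<in> pweight ` (gcentralizer pauli_inf (Sinf ?n ?S0) - set_mult pauli_inf (gcenter pauli_inf) (Sinf ?n ?S0))"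
    then show "2^(Suc r) \<le> w" using lb by auto
  qed
  then show "free_distance ?n ?S0 = 2^(r + 1)" by simp
  show "pure_code ?n ?S0"
    unfolding pure_code_def
  proof (intro ballI impI)
    fix e assume e: "e \<in> Sinf ?n ?S0" "e \<notin> gcenter pauli_inf"
    then obtain a b where ee: "e = (False, a, b)" "a \<in> ?UI" "b \<in> ?UI" using SI unfolding css_def by auto
    have nz: "a \<noteq> zv \<or> b \<noteq> zv" using e(2) center_Pinf unfolding ee Zc_def by auto
    have o: "\<not> ip u (gen \<mu> (t, T))" if "u \<in> ?UI" "T \<in> Tset \<mu> r" for u t T
      by (rule gspan_orth_gen[OF that(1) _ _ r]) (use that in auto)
    have "2^(Suc r) \<le> pweight e" unfolding ee
      by (rule weight_lb[of a b \<mu> r]) (use ee gspan_fs nz o in auto)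
    then show "free_distance ?n ?S0 \<le> pweight e" using fd by simp
  qed
qed



theorem mainTheorem13:
  fixes l m r :: nat
  assumes "1 \<le> l" and "l \<le> m"
    and "int r \<le> (int m - int l - 1) div 2"
  shows "\<exists>m' S0.
     m' \<le> 2 ^ (m - l) * (2 ^ l - 1) \<and>
     conv_stab_code (2 ^ (m - l)) (2 ^ (m - l) - 2 * (\<Sum>i = 0..r. (m - l) choose i)) m' S0 \<and>
     free_distance (2 ^ (m - l)) S0 = 2 ^ (r + 1) \<and>
     pure_code (2 ^ (m - l)) S0"
proof -
  have "2 * r < m - l" using assms(2,3) by presburger
  then show ?thesis using main_gen[of r "m - l" l] assms(1) by simp
qed

end
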